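(* Let all notation be as in the context. Define $$2\mathcal F=\mathrm{res}_{\infty_Q}\big(P\Phi_1\,dQ\big)+\mathrm{res}_{\infty_P}\big(Q\Phi_2\,dP\big)+\tfrac12\,\mathrm{res}_{\infty_Q}\big(P^2Q\,dQ\big)+t\,\mathrm{res}_{\lambda=\infty}\Big(\frac{V_1(Q)+V_2(P)-PQ}{\lambda}\,d\lambda\Big)+2t^2\ln\gamma .$$ Then also $$2\mathcal F=\sum_{K}u_KU_K+\sum_J v_JV_J+\tfrac12\,\mathrm{res}_{\infty_Q}\big(P^2Q\,dQ\big)+t\,\mathrm{res}_{\lambda=\infty}\Big(\frac{V_1(Q)+V_2(P)-PQ}{\lambda}\,d\lambda\Big)+2t^2\ln\gamma ,$$ and $\mathcal F$ is (up to an additive constant) the planar free energy, i.e. it satisfies $\partial_{u_K}\mathcal F=U_K$ for $1\le K\le d_1+1$ and $\partial_{v_J}\mathcal F=V_J$ for $1\le J\le d_2+1$.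
   Context: Fix integers $d_1,d_2\ge 1$. For complex parameters $\gamma\neq 0$, $\alpha_0,\dots,\alpha_{d_2}$, $\beta_0,\dots,\beta_{d_1}$ put $Q(\lambda)=\gamma\lambda+\sum_{j=0}^{d_2}\alpha_j\lambda^{-j}$ and $P(\lambda)=\frac{\gamma}{\lambda}+\sum_{j=0}^{d_1}\beta_j\lambda^j$, meromorphic on the Riemann sphere of $\lambda$; $\infty_Q$ denotes $\lambda=\infty$ and $\infty_P$ denotes $\lambda=0$. All residues are ordinary residues of meromorphic differentials at the indicated point (so $\mathrm{res}_{\lambda=\infty}\frac{d\lambda}{\lambda}=-1$). Define $t=\mathrm{res}_{\infty_Q}P\,dQ$, $u_K=-\mathrm{res}_{\infty_Q}PQ^{-K}dQ$ ($1\le K\le d_1+1$), $v_J=-\mathrm{res}_{\infty_P}QP^{-J}dP$ ($1\le J\le d_2+1$), $V_1(x)=\sum_{K=1}^{d_1+1}\frac{u_K}{K}x^K$, $V_2(y)=\sum_{J=1}^{d_2+1}\frac{v_J}{J}y^J$. Expanding in the local parameter $1/Q$ near $\infty_Q$ and $1/P$ near $\infty_P$, one has $P=V_1'(Q)-\frac tQ+\sum_{K\ge1}KU_KQ^{-K-1}$ and $Q=V_2'(P)-\frac tP+\sum_{J\ge1}JV_JP^{-J-1}$; this defines the numbers $U_K,V_J$. The exterior potentials are $\Phi_1=-\sum_{K\ge1}U_KQ^{-K}$ (near $\infty_Q$) and $\Phi_2=-\sum_{J\ge1}V_JP^{-J}$ (near $\infty_P$). The $d_1+d_2+3$ quantities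 $u_1,\dots,u_{d_1+1},v_1,\dots,v_{d_2+1},t$ are used as independent local coordinates on the parameter space $(\gamma,\alpha_j,\beta_j)$ (where this change of variables is locally biholomorphic); $\partial_{u_K},\partial_{v_J},\partial_t$ are partial derivatives in these coordinates. *)

theory Defs
  imports "HOL-Analysis.Analysis" "HOL-Computational_Algebra.Formal_Laurent_Series"
begin

text \<open>All objects are formal Laurent series in a local coordinate x centred at the point
  under consideration.  At infinity_Q (lambda = infinity) the coordinate is x = 1/lambda;
  at infinity_P (lambda = 0) the coordinate is x = lambda.  In the coordinate centred at the
  pole of a function A we have A = gamma/x + sum a_j x^j, and the other function is
  B = gamma x + sum b_j x^(-j).\<close>

definition big :: "complex \<Rightarrow> (nat \<Rightarrow> complex) \<Rightarrow> nat \<Rightarrow> complex fls" where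
  "big \<gamma> a d = fls_const \<gamma> * fls_X_inv + (\<Sum>j\<le>d. fls_const (a j) * fls_X ^ j)"

definition small :: "complex \<Rightarrow> (nat \<Rightarrow> complex) \<Rightarrow> nat \<Rightarrow> complex fls" where
  "small \<gamma> b e = fls_const \<gamma> * fls_X + (\<Sum>j\<le>e. fls_const (b j) * fls_X_inv ^ j)"

text \<open>Q and P in the coordinate z = 1/lambda at infinity_Q, and in the coordinate lambda
  at infinity_P.\<close>
definition Qz where "Qz d1 d2 \<gamma> \<alpha> \<beta> = big \<gamma> \<alpha> d2"
definition Pz where "Pz d1 d2 \<gamma> \<alpha> \<beta> = small \<gamma> \<beta> d1"
definition Pl where "Pl d1 d2 \<gamma> \<alpha> \<beta> = big \<gamma> \<beta> d1"
definition Ql where "Ql d1 d2 \<gamma> \<alpha> \<beta> = small \<gamma> \<alpha> d2"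

definition fres :: "complex fls \<Rightarrow> complex fls \<Rightarrow> complex" where
  "fres f g = fls_residue (f * fls_deriv g)"

text \<open>The local parameter 1/A as a power series in x, and the expansion of f in powers of
  the local parameter 1/A: coefficient of A^n.\<close>
definition locpar :: "complex fls \<Rightarrow> complex fps" where
  "locpar A = fls_regpart (inverse A)"

definition exp_coeff :: "complex fls \<Rightarrow> complex fls \<Rightarrow> int \<Rightarrow> complex" where
  "exp_coeff A f n = fls_nth (fls_compose_fps f (fps_inv (locpar A))) (- n)"

definition tt where "tt d1 d2 \<gamma> \<alpha> \<beta> = fres (Pz d1 d2 \<gamma> \<alpha> \<beta>) (Qz d1 d2 \<gamma> \<alpha> \<beta>)"

definition uu where "uu d1 d2 \<gamma> \<alpha> \<beta> K =
  - fres (Pz d1 d2 \<gamma> \<alpha> \<beta> * inverse (Qz d1 d2 \<gamma> \<alpha> \<beta>) ^ K) (Qz d1 d2 \<gamma> \<alpha> \<beta>)"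

definition vv where "vv d1 d2 \<gamma> \<alpha> \<beta> J =
  - fres (Ql d1 d2 \<gamma> \<alpha> \<beta> * inverse (Pl d1 d2 \<gamma> \<alpha> \<beta>) ^ J) (Pl d1 d2 \<gamma> \<alpha> \<beta>)"

text \<open>P = V_1'(Q) - t/Q + sum K U_K Q^(-K-1): K U_K is the coefficient of Q^(-K-1).\<close>
definition UU where "UU d1 d2 \<gamma> \<alpha> \<beta> K =
  exp_coeff (Qz d1 d2 \<gamma> \<alpha> \<beta>) (Pz d1 d2 \<gamma> \<alpha> \<beta>) (- (int K + 1)) / of_nat K"

definition VV where "VV d1 d2 \<gamma> \<alpha> \<beta> J =
  exp_coeff (Pl d1 d2 \<gamma> \<alpha> \<beta>) (Ql d1 d2 \<gamma> \<alpha> \<beta>) (- (int J + 1)) / of_nat J"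

definition V1 :: "nat \<Rightarrow> nat \<Rightarrow> complex \<Rightarrow> (nat \<Rightarrow> complex) \<Rightarrow> (nat \<Rightarrow> complex) \<Rightarrow> complex fls \<Rightarrow> complex fls" where
  "V1 d1 d2 \<gamma> \<alpha> \<beta> x = (\<Sum>K\<in>{1..d1+1}. fls_const (uu d1 d2 \<gamma> \<alpha> \<beta> K / of_nat K) * x ^ K)"

definition V2 :: "nat \<Rightarrow> nat \<Rightarrow> complex \<Rightarrow> (nat \<Rightarrow> complex) \<Rightarrow> (nat \<Rightarrow> complex) \<Rightarrow> complex fls \<Rightarrow> complex fls" where
  "V2 d1 d2 \<gamma> \<alpha> \<beta> y = (\<Sum>J\<in>{1..d2+1}. fls_const (vv d1 d2 \<gamma> \<alpha> \<beta> J / of_nat J) * y ^ J)"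

text \<open>Phi_1 = - sum_K U_K Q^(-K), a power series in the local parameter 1/Q, rewritten in the
  coordinate z = 1/lambda; likewise Phi_2 in the coordinate lambda.\<close>
definition Phi1 where "Phi1 d1 d2 \<gamma> \<alpha> \<beta> =
  fps_to_fls (fps_compose (Abs_fps (\<lambda>n. if n = 0 then 0 else - UU d1 d2 \<gamma> \<alpha> \<beta> n))
              (locpar (Qz d1 d2 \<gamma> \<alpha> \<beta>)))"

definition Phi2 where "Phi2 d1 d2 \<gamma> \<alpha> \<beta> =
  fps_to_fls (fps_compose (Abs_fps (\<lambda>n. if n = 0 then 0 else - VV d1 d2 \<gamma> \<alpha> \<beta> n))
              (locpar (Pl d1 d2 \<gamma> \<alpha> \<beta>)))"

text \<open>The common tail: 1/2 res_{inf_Q} P^2 Q dQ + t res_{lambda=inf} (V1(Q)+V2(P)-PQ)/lambda dlambda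
  + 2 t^2 ln gamma, with lg a chosen branch of the logarithm.\<close>
definition tail where "tail d1 d2 lg \<gamma> \<alpha> \<beta> =
  (let P = Pz d1 d2 \<gamma> \<alpha> \<beta>; Q = Qz d1 d2 \<gamma> \<alpha> \<beta>; t = tt d1 d2 \<gamma> \<alpha> \<beta> in
   fres (P ^ 2 * Q) Q / 2
   + t * fres ((V1 d1 d2 \<gamma> \<alpha> \<beta> Q + V2 d1 d2 \<gamma> \<alpha> \<beta> P - P * Q) * fls_X) fls_X_inv
   + 2 * t ^ 2 * lg \<gamma>)"

definition twoF where "twoF d1 d2 lg \<gamma> \<alpha> \<beta> =
  fres (Pz d1 d2 \<gamma> \<alpha> \<beta> * Phi1 d1 d2 \<gamma> \<alpha> \<beta>) (Qz d1 d2 \<gamma> \<alpha> \<beta>)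
  + fres (Ql d1 d2 \<gamma> \<alpha> \<beta> * Phi2 d1 d2 \<gamma> \<alpha> \<beta>) (Pl d1 d2 \<gamma> \<alpha> \<beta>)
  + tail d1 d2 lg \<gamma> \<alpha> \<beta>"

definition FF where "FF d1 d2 lg \<gamma> \<alpha> \<beta> = twoF d1 d2 lg \<gamma> \<alpha> \<beta> / 2"

text \<open>A parameter point is a vector p with indices 0 .. d1+d2+2:
  gamma = p 0, alpha_j = p (1+j) (j \<le> d2), beta_j = p (d2+2+j) (j \<le> d1).\<close>
definition pg :: "(nat \<Rightarrow> complex) \<Rightarrow> complex" where "pg p = p 0"
definition pa :: "(nat \<Rightarrow> complex) \<Rightarrow> nat \<Rightarrow> complex" where "pa p j = p (Suc j)"
definition pb :: "nat \<Rightarrow> (nat \<Rightarrow> complex) \<Rightarrow> nat \<Rightarrow> complex" where "pb d2 p j = p (d2 + 2 + j)"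

abbreviation NN :: "nat \<Rightarrow> nat \<Rightarrow> nat" where "NN d1 d2 \<equiv> d1 + d2 + 3"

definition coord :: "nat \<Rightarrow> nat \<Rightarrow> nat \<Rightarrow> (nat \<Rightarrow> complex) \<Rightarrow> complex" where
  "coord d1 d2 i p =
     (if i \<le> d1 then uu d1 d2 (pg p) (pa p) (pb d2 p) (i + 1)
      else if i \<le> d1 + d2 + 1 then vv d1 d2 (pg p) (pa p) (pb d2 p) (i - d1)
      else tt d1 d2 (pg p) (pa p) (pb d2 p))"

definition jac :: "nat \<Rightarrow> nat \<Rightarrow> (nat \<Rightarrow> complex) \<Rightarrow> nat \<Rightarrow> nat \<Rightarrow> complex" where
  "jac d1 d2 p i j = deriv (\<lambda>x. coord d1 d2 i (p(j := x))) (p j)"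

definition jac_nonsingular :: "nat \<Rightarrow> nat \<Rightarrow> (nat \<Rightarrow> complex) \<Rightarrow> bool" where
  "jac_nonsingular d1 d2 p \<longleftrightarrow>
     (\<forall>h. (\<forall>i<NN d1 d2. (\<Sum>j<NN d1 d2. jac d1 d2 p i j * h j) = 0) \<longrightarrow> (\<forall>j<NN d1 d2. h j = 0))"

text \<open>Partial derivative in the coordinates (u,v,t): c is a coordinate line through p in
  direction of coordinate number i (all other coordinates kept fixed), and G has derivative D
  along it.  Since the coordinate change is locally biholomorphic at p, such lines exist
  and are unique, and this is exactly the partial derivative.\<close>
definition coord_line :: "nat \<Rightarrow> nat \<Rightarrow> nat \<Rightarrow> (nat \<Rightarrow> complex) \<Rightarrow> (complex \<Rightarrow> nat \<Rightarrow> complex) \<Rightarrow> bool" where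
  "coord_line d1 d2 i p c \<longleftrightarrow>
     (\<forall>j<NN d1 d2. c 0 j = p j \<and> (\<lambda>s. c s j) field_differentiable (at 0)) \<and>
     (\<forall>\<^sub>F s in nhds 0. \<forall>k<NN d1 d2. coord d1 d2 k (c s) = coord d1 d2 k p + (if k = i then s else 0))"

definition has_partial :: "nat \<Rightarrow> nat \<Rightarrow> ((nat \<Rightarrow> complex) \<Rightarrow> complex) \<Rightarrow> nat \<Rightarrow> (nat \<Rightarrow> complex) \<Rightarrow> complex \<Rightarrow> bool" where
  "has_partial d1 d2 G i p D \<longleftrightarrow>
     (\<forall>c. coord_line d1 d2 i p c \<longrightarrow> ((\<lambda>s. G (c s)) has_field_derivative D) (at 0))"

end

theory Submission
  imports Defs
begin

unbundle Formal_Laurent_Series.fps_syntax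
unbundle Formal_Power_Series.fps_syntax

lemma fls_deriv_powi:
  fixes f :: "complex fls"
  shows "fls_deriv (f powi n) = of_int n * f powi (n - 1) * fls_deriv f"
proof (cases "f = 0")
  case True
  then show ?thesis by (simp add: power_int_0_left_if)
next
  case nz: False
  show ?thesis
  proof (cases "n \<ge> 0")
    case True
    then obtain m where n: "n = int m" by (metis nonneg_int_cases)
    show ?thesis
    proof (cases m)
      case 0 then show ?thesis using n by simp
    next
      case (Suc k)
      have e1: "n - 1 = int k" using n Suc by simp
      have "f powi n = f ^ m" "f powi (n - 1) = f ^ k" unfolding e1 using n by (simp_all only: power_int_of_nat)
      then have "fls_deriv (f powi n) = of_nat m * f ^ (m - 1) * fls_deriv f"
        by (simp only: fls_deriv_power)
      then show ?thesis using n Suc \<open>f powi (n - 1) = f ^ k\<close> by simp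
    qed
  next
    case False
    then obtain m where n: "n = - int m" and m: "m > 0" proof -
      have "0 < - n" using False by simp
      then show ?thesis using that[of "nat (-n)"] by simp
    qed
    have "f powi n = inverse (f ^ m)" using n by (simp add: power_int_def nat_minus_as_int power_inverse)
    then have "fls_deriv (f powi n) = - fls_deriv (f ^ m) * (inverse (f ^ m))\<^sup>2"
      by (simp add: fls_inverse_deriv)
    also have "\<dots> = - (of_nat m * f ^ (m - 1) * fls_deriv f) * (inverse (f ^ m))\<^sup>2"
      by (simp add: fls_deriv_power)
    also have "\<dots> = of_int n * f powi (n - 1) * fls_deriv f"
    proof -
      have "f powi (n - 1) = inverse (f ^ (m + 1))" using n by (simp add: power_int_def nat_add_distrib power_inverse)
      moreover have "f ^ (m - 1) * (inverse (f ^ m))\<^sup>2 = inverse (f ^ (m + 1))"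
        using m nz by (cases m) (auto simp: field_simps power2_eq_square)
      ultimately show ?thesis using n by (simp add: algebra_simps)
    qed
    finally show ?thesis .
  qed
qed

lemma res_powi_deriv:
  fixes A :: "complex fls"
  assumes "A \<noteq> 0"
  shows "fls_residue (A powi k * fls_deriv A) = (if k = -1 then of_int (fls_subdegree A) else 0)"
proof (cases "k = -1")
  case True
  then have "A powi k = inverse A" by (simp add: power_int_minus)
  then show ?thesis using True fls_residue_deriv_times_inverse_eq_subdegree(2)[of A] by simp
next
  case False
  have "fls_deriv (A powi (k+1)) = of_int (k+1) * (A powi k * fls_deriv A)"
    by (simp add: fls_deriv_powi mult.assoc)
  moreover have c: "(of_int (k+1) :: complex) \<noteq> 0" using False
    by (metis add.inverse_inverse add_eq_0_iff of_int_1 of_int_eq_iff of_int_minus of_int_0_eq_iff)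
  ultimately have "fls_const (inverse (of_int (k+1))) * fls_deriv (A powi (k+1)) =
     fls_const (inverse (of_int (k+1)) * of_int (k+1)) * (A powi k * fls_deriv A)"
    by (simp add: fls_of_int fls_const_mult_const[symmetric] mult.assoc del: of_int_add)
  also have "\<dots> = A powi k * fls_deriv A" using c by simp
  finally have "A powi k * fls_deriv A = fls_const (inverse (of_int (k+1))) * fls_deriv (A powi (k+1))" ..
  then show ?thesis using False
    by (simp only: fls_residue_fls_const_times fls_residue_deriv) simp
qed

lemma fls_times_nth_bound:
  fixes f g :: "complex fls"
  assumes f: "\<forall>k<N1. f $$ k = 0" and g: "\<forall>k<N2. g $$ k = 0"
  shows "(f*g) $$ n = (\<Sum>i=N1..n-N2. f $$ i * g $$ (n-i))"
proof (cases "f = 0 \<or> g = 0")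
  case True then show ?thesis by auto
next
  case False
  then have nz: "f \<noteq> 0" "g \<noteq> 0" by auto
  have df: "N1 \<le> fls_subdegree f" using f nz by (intro fls_subdegree_geI) auto
  have dg: "N2 \<le> fls_subdegree g" using g nz by (intro fls_subdegree_geI) auto
  have "(f*g) $$ n = (\<Sum>i=fls_subdegree f..n - fls_subdegree g. f $$ i * g $$ (n - i))"
    by (rule fls_times_nth(2))
  also have "\<dots> = (\<Sum>i=N1..n-N2. f $$ i * g $$ (n-i))"
  proof (rule sum.mono_neutral_left)
    show "finite {N1..n - N2}" by simp
    show "{fls_subdegree f..n - fls_subdegree g} \<subseteq> {N1..n - N2}" using df dg by auto
    show "\<forall>i\<in>{N1..n - N2} - {fls_subdegree f..n - fls_subdegree g}. f $$ i * g $$ (n - i) = 0"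
      by auto
  qed
  finally show ?thesis .
qed

definition fd :: "(complex \<Rightarrow> complex fls) \<Rightarrow> complex fls \<Rightarrow> bool" where
  "fd f f' \<longleftrightarrow> (\<exists>N. eventually (\<lambda>s. \<forall>n<N. f s $$ n = 0) (nhds 0)) \<and>
     (\<forall>n. ((\<lambda>s. f s $$ n) has_field_derivative f' $$ n) (at 0))"

lemma fd_nthD: "fd f f' \<Longrightarrow> ((\<lambda>s. f s $$ n) has_field_derivative f' $$ n) (at 0)"
  unfolding fd_def by blast

lemma fd_lowE:
  assumes "fd f f'"
  obtains N where "eventually (\<lambda>s. \<forall>n<N. f s $$ n = 0) (nhds 0)" "\<forall>n<N. f' $$ n = 0" "\<forall>n<N. f 0 $$ n = 0"
proof -
  from assms obtain N where ev: "eventually (\<lambda>s. \<forall>n<N. f s $$ n = 0) (nhds 0)" unfolding fd_def by blast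
  have "f' $$ n = 0" if "n < N" for n
  proof -
    have d: "((\<lambda>s. f s $$ n) has_field_derivative f' $$ n) (at 0)" using assms fd_nthD by blast
    have "eventually (\<lambda>s. f s $$ n = 0) (nhds 0)" using ev by (rule eventually_mono) (use that in auto)
    then have "((\<lambda>s. f s $$ n) has_field_derivative 0) (at 0) \<longleftrightarrow> ((\<lambda>s. 0) has_field_derivative 0) (at 0)"
      using DERIV_cong_ev[of 0 0 "\<lambda>s. f s $$ n" "\<lambda>s. 0" 0 0] by simp
    then have "((\<lambda>s. f s $$ n) has_field_derivative 0) (at 0)" by (simp only: DERIV_const)
    then show ?thesis using d DERIV_unique by blast
  qed
  moreover have "\<forall>n<N. f 0 $$ n = 0" using eventually_nhds_x_imp_x[OF ev] .
  ultimately show ?thesis using that ev by blast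
qed

lemma fd_cong_ev:
  assumes "fd f f'" "eventually (\<lambda>s. f s = g s) (nhds 0)"
  shows "fd g f'"
proof -
  from assms(1) obtain N where ev: "eventually (\<lambda>s. \<forall>n<N. f s $$ n = 0) (nhds 0)" unfolding fd_def by blast
  have "eventually (\<lambda>s. \<forall>n<N. g s $$ n = 0) (nhds 0)"
    using eventually_conj[OF ev assms(2)] by (rule eventually_mono) auto
  moreover have "((\<lambda>s. g s $$ n) has_field_derivative f' $$ n) (at 0)" for n
  proof -
    have "eventually (\<lambda>s. f s $$ n = g s $$ n) (nhds 0)" using assms(2) by (rule eventually_mono) auto
    then show ?thesis using fd_nthD[OF assms(1), of n] DERIV_cong_ev[of 0 0 "\<lambda>s. f s $$ n" "\<lambda>s. g s $$ n"] by auto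
  qed
  ultimately show ?thesis unfolding fd_def by blast
qed

lemma fd_unique: "fd f f' \<Longrightarrow> fd f f'' \<Longrightarrow> f' = f''"
  by (intro fls_eqI) (meson DERIV_unique fd_nthD)

lemma fd_const: "fd (\<lambda>s. F) 0"
proof -
  obtain N where "\<forall>n<N. F $$ n = 0" by (elim fls_nth_vanishes_belowE) 
  then show ?thesis unfolding fd_def by auto
qed

lemma fd_add: "fd f f' \<Longrightarrow> fd g g' \<Longrightarrow> fd (\<lambda>s. f s + g s) (f' + g')"
proof -
  assume a: "fd f f'" "fd g g'"
  from a obtain N1 N2 where e1: "eventually (\<lambda>s. \<forall>n<N1. f s $$ n = 0) (nhds 0)"
    and e2: "eventually (\<lambda>s. \<forall>n<N2. g s $$ n = 0) (nhds 0)" unfolding fd_def by blast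
  have "eventually (\<lambda>s. \<forall>n<min N1 N2. (f s + g s) $$ n = 0) (nhds 0)"
    using eventually_conj[OF e1 e2] by (rule eventually_mono) auto
  moreover have "((\<lambda>s. (f s + g s) $$ n) has_field_derivative (f' + g') $$ n) (at 0)" for n
    using DERIV_add[OF fd_nthD[OF a(1)] fd_nthD[OF a(2)]] by simp
  ultimately show ?thesis unfolding fd_def by blast
qed

lemma fd_uminus: "fd f f' \<Longrightarrow> fd (\<lambda>s. - f s) (- f')"
proof -
  assume a: "fd f f'"
  from a obtain N1 where e1: "eventually (\<lambda>s. \<forall>n<N1. f s $$ n = 0) (nhds 0)" unfolding fd_def by blast
  have "eventually (\<lambda>s. \<forall>n<N1. (- f s) $$ n = 0) (nhds 0)"
    using e1 by (rule eventually_mono) auto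
  moreover have "((\<lambda>s. (- f s) $$ n) has_field_derivative (- f') $$ n) (at 0)" for n
    using DERIV_minus[OF fd_nthD[OF a]] by simp
  ultimately show ?thesis unfolding fd_def by blast
qed

lemma fd_diff: "fd f f' \<Longrightarrow> fd g g' \<Longrightarrow> fd (\<lambda>s. f s - g s) (f' - g')"
  using fd_add[of f f' "\<lambda>s. - g s" "- g'"] fd_uminus[of g g'] by simp

lemma fd_mult:
  assumes a: "fd f f'" "fd g g'"
  shows "fd (\<lambda>s. f s * g s) (f' * g 0 + f 0 * g')"
proof -
  obtain N1 where e1: "eventually (\<lambda>s. \<forall>n<N1. f s $$ n = 0) (nhds 0)" and
    d1: "\<forall>n<N1. f' $$ n = 0" and z1: "\<forall>n<N1. f 0 $$ n = 0" using fd_lowE[OF a(1)] by blast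
  obtain N2 where e2: "eventually (\<lambda>s. \<forall>n<N2. g s $$ n = 0) (nhds 0)" and
    d2: "\<forall>n<N2. g' $$ n = 0" and z2: "\<forall>n<N2. g 0 $$ n = 0" using fd_lowE[OF a(2)] by blast
  have ev: "eventually (\<lambda>s. \<forall>n. (f s * g s) $$ n = (\<Sum>i=N1..n-N2. f s $$ i * g s $$ (n-i))) (nhds 0)"
    using eventually_conj[OF e1 e2] by (rule eventually_mono) (auto intro: fls_times_nth_bound)
  have "eventually (\<lambda>s. \<forall>n<N1+N2. (f s * g s) $$ n = 0) (nhds 0)"
    using ev by (rule eventually_mono) auto
  moreover have "((\<lambda>s. (f s * g s) $$ n) has_field_derivative (f' * g 0 + f 0 * g') $$ n) (at 0)" for n
  proof -
    have D: "((\<lambda>s. (\<Sum>i=N1..n-N2. f s $$ i * g s $$ (n-i))) has_field_derivative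
        (\<Sum>i=N1..n-N2. f' $$ i * g 0 $$ (n-i) + f 0 $$ i * g' $$ (n-i))) (at 0)"
    proof (intro DERIV_sum)
      fix i
      show "((\<lambda>s. f s $$ i * g s $$ (n-i)) has_field_derivative f' $$ i * g 0 $$ (n-i) + f 0 $$ i * g' $$ (n-i)) (at 0)"
        using DERIV_mult[OF fd_nthD[OF a(1)] fd_nthD[OF a(2)], of i "n-i"] by (simp only: ac_simps)
    qed
    have E: "(\<Sum>i=N1..n-N2. f' $$ i * g 0 $$ (n-i) + f 0 $$ i * g' $$ (n-i)) = (f' * g 0 + f 0 * g') $$ n"
    proof -
      have "(f' * g 0 + f 0 * g') $$ n = (f' * g 0) $$ n + (f 0 * g') $$ n" by simp
      also have "\<dots> = (\<Sum>i=N1..n-N2. f' $$ i * g 0 $$ (n-i)) + (\<Sum>i=N1..n-N2. f 0 $$ i * g' $$ (n-i))"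
        using fls_times_nth_bound[OF d1 z2, of n] fls_times_nth_bound[OF z1 d2, of n] by simp
      finally show ?thesis by (simp only: sum.distrib)
    qed
    have evn: "eventually (\<lambda>s. (f s * g s) $$ n = (\<Sum>i=N1..n-N2. f s $$ i * g s $$ (n-i))) (nhds 0)"
      using ev by (rule eventually_mono) blast
    show ?thesis using DERIV_cong_ev[OF refl evn refl] D E by simp
  qed
  ultimately show ?thesis unfolding fd_def by blast
qed

lemma fd_deriv: "fd f f' \<Longrightarrow> fd (\<lambda>s. fls_deriv (f s)) (fls_deriv f')"
proof -
  assume a: "fd f f'"
  from a obtain N1 where e1: "eventually (\<lambda>s. \<forall>n<N1. f s $$ n = 0) (nhds 0)" unfolding fd_def by blast
  have "eventually (\<lambda>s. \<forall>n<N1 - 1. fls_deriv (f s) $$ n = 0) (nhds 0)"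
    using e1 by (rule eventually_mono) auto
  moreover have "((\<lambda>s. fls_deriv (f s) $$ n) has_field_derivative fls_deriv f' $$ n) (at 0)" for n
    using DERIV_cmult[OF fd_nthD[OF a, of "n+1"], of "of_int (n+1)"] by simp
  ultimately show ?thesis unfolding fd_def by blast
qed

lemma fd_fls_const: "(a has_field_derivative a') (at 0) \<Longrightarrow> fd (\<lambda>s. fls_const (a s)) (fls_const a')"
  unfolding fd_def
  by (auto intro!: exI[of _ 0] simp: DERIV_const)

lemma fd_scale: "(a has_field_derivative a') (at 0) \<Longrightarrow> fd f f' \<Longrightarrow>
   fd (\<lambda>s. fls_const (a s) * f s) (fls_const a' * f 0 + fls_const (a 0) * f')"
  using fd_mult[OF fd_fls_const] by blast

lemma fd_power: "fd f f' \<Longrightarrow> fd (\<lambda>s. f s ^ k) (of_nat k * f 0 ^ (k - 1) * f')"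
proof (induction k)
  case 0 then show ?case using fd_const[of 1] by simp
next
  case (Suc k)
  have "fd (\<lambda>s. f s * f s ^ k) (f' * f 0 ^ k + f 0 * (of_nat k * f 0 ^ (k - 1) * f'))"
    using fd_mult[OF Suc.prems Suc.IH[OF Suc.prems]] by simp
  moreover have "f' * f 0 ^ k + f 0 * (of_nat k * f 0 ^ (k - 1) * f') = of_nat (Suc k) * f 0 ^ (Suc k - 1) * f'"
    by (cases k) (simp_all add: algebra_simps)
  ultimately show ?case by simp
qed

lemma fd_sum: "finite A \<Longrightarrow> (\<And>i. i \<in> A \<Longrightarrow> fd (\<lambda>s. f i s) (f' i)) \<Longrightarrow> fd (\<lambda>s. \<Sum>i\<in>A. f i s) (\<Sum>i\<in>A. f' i)"
proof (induction A rule: finite_induct)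
  case empty then show ?case using fd_const[of 0] by simp
next
  case (insert x F)
  then show ?case using fd_add[of "f x" "f' x" "\<lambda>s. \<Sum>i\<in>F. f i s"] by simp
qed

lemma fd_residue: "fd f f' \<Longrightarrow> ((\<lambda>s. fls_residue (f s)) has_field_derivative fls_residue f') (at 0)"
  by (simp add: fd_nthD)

lemma big_nth: "big \<gamma> a d $$ n = (if n = -1 then \<gamma> else if 0 \<le> n \<and> n \<le> int d then a (nat n) else 0)"
proof -
  have "(\<Sum>j\<le>d. fls_const (a j) * fls_X ^ j) $$ n = (\<Sum>j\<le>d. if n = int j then a j else 0)"
    by (simp add: fls_nth_sum if_distrib cong: if_cong)
  also have "\<dots> = (if 0 \<le> n \<and> n \<le> int d then a (nat n) else 0)"
  proof (cases "0 \<le> n \<and> n \<le> int d")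
    case True
    then have "(\<Sum>j\<le>d. if n = int j then a j else 0) = (\<Sum>j\<in>{nat n}. if n = int j then a j else 0)"
      by (intro sum.mono_neutral_right) auto
    then show ?thesis using True by simp
  next
    case False
    then show ?thesis by (intro trans[OF sum.neutral]) auto
  qed
  finally show ?thesis unfolding big_def by simp
qed

lemma small_nth: "small \<gamma> b e $$ n = (if n = 1 then \<gamma> else if - int e \<le> n \<and> n \<le> 0 then b (nat (-n)) else 0)"
proof -
  have "(\<Sum>j\<le>e. fls_const (b j) * fls_X_inv ^ j) $$ n = (\<Sum>j\<le>e. if n = - int j then b j else 0)"
    by (simp add: fls_nth_sum if_distrib cong: if_cong)
  also have "\<dots> = (if - int e \<le> n \<and> n \<le> 0 then b (nat (-n)) else 0)"
  proof (cases "- int e \<le> n \<and> n \<le> 0")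
    case True
    then have "(\<Sum>j\<le>e. if n = - int j then b j else 0) = (\<Sum>j\<in>{nat (-n)}. if n = - int j then b j else 0)"
      by (intro sum.mono_neutral_right) auto
    then show ?thesis using True by simp
  next
    case False
    then show ?thesis by (intro trans[OF sum.neutral]) auto
  qed
  finally show ?thesis unfolding small_def by simp
qed

lemma big_nz: "\<gamma> \<noteq> 0 \<Longrightarrow> big \<gamma> a d \<noteq> 0"
  by (metis big_nth fls_zero_nth)

lemma big_subdeg: "\<gamma> \<noteq> 0 \<Longrightarrow> fls_subdegree (big \<gamma> a d) = -1"
  by (intro fls_subdegree_eqI) (auto simp: big_nth)

lemma small_nz: "\<gamma> \<noteq> 0 \<Longrightarrow> small \<gamma> b e \<noteq> 0"
  by (metis small_nth fls_zero_nth zero_neq_one)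

lemma small_low: "n < - int e \<Longrightarrow> small \<gamma> b e $$ n = 0"
  by (simp add: small_nth)

lemma big_low: "n < -1 \<Longrightarrow> big \<gamma> a d $$ n = 0"
  by (simp add: big_nth)

definition lp :: "complex fls \<Rightarrow> bool" where "lp f \<longleftrightarrow> (\<exists>M. \<forall>n>M. f $$ n = 0)"

definition flip :: "complex fls \<Rightarrow> complex fls" where "flip f = Abs_fls (\<lambda>n. f $$ (-n))"

lemma flip_nth: "lp f \<Longrightarrow> flip f $$ n = f $$ (-n)"
  unfolding flip_def lp_def
proof -
  assume "\<exists>M. \<forall>n>M. f $$ n = 0"
  then obtain M where "\<forall>n>M. f $$ n = 0" by blast
  then have "\<forall>n< -M. f $$ (-n) = 0" by auto
  then show "Abs_fls (\<lambda>n. f $$ (- n)) $$ n = f $$ (- n)" by (rule nth_Abs_fls_lower_bound)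
qed

lemma lp_flip: "lp f \<Longrightarrow> lp (flip f)"
proof -
  assume a: "lp f"
  obtain N where "\<forall>n<N. f $$ n = 0" by (elim fls_nth_vanishes_belowE)
  then have "\<forall>n> -N. flip f $$ n = 0" using flip_nth[OF a] by auto
  then show ?thesis unfolding lp_def by blast
qed

lemma flip_flip: "lp f \<Longrightarrow> flip (flip f) = f"
  by (intro fls_eqI) (simp add: flip_nth lp_flip)

lemma lp_add: "lp f \<Longrightarrow> lp g \<Longrightarrow> lp (f + g)"
  unfolding lp_def by (metis (no_types, opaque_lifting) add.right_neutral fls_plus_nth max.strict_boundedE)

lemma lp_uminus: "lp f \<Longrightarrow> lp (- f)"
  unfolding lp_def by auto

lemma lp_diff: "lp f \<Longrightarrow> lp g \<Longrightarrow> lp (f - g)"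
  using lp_add[of f "-g"] lp_uminus[of g] by simp

lemma lp_const: "lp (fls_const c)"
  unfolding lp_def by (auto intro: exI[of _ 0])

lemma lp_X: "lp fls_X" unfolding lp_def by (auto intro: exI[of _ 1])
lemma lp_X_inv: "lp fls_X_inv" unfolding lp_def by (auto intro: exI[of _ 1])

lemma fls_times_nth_support:
  fixes f g :: "complex fls"
  assumes f1: "\<forall>k<L. f $$ k = 0" and f2: "\<forall>k>M. f $$ k = 0" and g: "\<forall>k<N2. g $$ k = 0"
  shows "(f*g) $$ n = (\<Sum>i=L..M. f $$ i * g $$ (n-i))"
proof -
  have "(f*g) $$ n = (\<Sum>i=L..n-N2. f $$ i * g $$ (n-i))" by (rule fls_times_nth_bound[OF f1 g])
  also have "\<dots> = (\<Sum>i=L..min M (n-N2). f $$ i * g $$ (n-i))"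
    by (rule sum.mono_neutral_right) (use f2 in auto)
  also have "\<dots> = (\<Sum>i=L..M. f $$ i * g $$ (n-i))"
    by (rule sum.mono_neutral_left) (use g in auto)
  finally show ?thesis .
qed

lemma lp_mult: "lp f \<Longrightarrow> lp g \<Longrightarrow> lp (f * g)"
proof -
  assume a: "lp f" "lp g"
  obtain M1 M2 where m: "\<forall>n>M1. f $$ n = 0" "\<forall>n>M2. g $$ n = 0" using a unfolding lp_def by blast
  obtain L1 where l1: "\<forall>n<L1. f $$ n = 0" by (elim fls_nth_vanishes_belowE)
  obtain L2 where l2: "\<forall>n<L2. g $$ n = 0" by (elim fls_nth_vanishes_belowE)
  have "\<forall>n>M1+M2. (f*g) $$ n = 0"
  proof safe
    fix n assume "n > M1 + M2"
    then show "(f*g) $$ n = 0" unfolding fls_times_nth_support[OF l1 m(1) l2] using m(2)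
      by (intro sum.neutral) auto
  qed
  then show ?thesis unfolding lp_def by blast
qed

lemma lp_power: "lp f \<Longrightarrow> lp (f ^ n)"
  by (induction n) (auto simp: lp_mult lp_const[of 1, simplified])

lemma lp_sum: "(\<And>i. i \<in> A \<Longrightarrow> lp (f i)) \<Longrightarrow> lp (\<Sum>i\<in>A. f i)"
  by (induction A rule: infinite_finite_induct) (auto simp: lp_add lp_const[of 0, simplified])

lemma lp_deriv: "lp f \<Longrightarrow> lp (fls_deriv f)"
  unfolding lp_def by (metis fls_deriv_nth mult_zero_right zless_add1_eq)

lemma lp_big: "lp (big \<gamma> a d)"
  unfolding lp_def by (auto simp: big_nth intro!: exI[of _ "int d"])

lemma lp_small: "lp (small \<gamma> a d)"
  unfolding lp_def by (auto simp: small_nth intro!: exI[of _ 1])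

lemma flip_add: "lp f \<Longrightarrow> lp g \<Longrightarrow> flip (f + g) = flip f + flip g"
  by (intro fls_eqI) (simp add: flip_nth lp_add)

lemma flip_uminus: "lp f \<Longrightarrow> flip (- f) = - flip f"
  by (intro fls_eqI) (simp add: flip_nth lp_uminus)

lemma flip_diff: "lp f \<Longrightarrow> lp g \<Longrightarrow> flip (f - g) = flip f - flip g"
  by (intro fls_eqI) (simp add: flip_nth lp_diff)

lemma flip_const: "flip (fls_const c) = fls_const c"
  by (intro fls_eqI) (simp add: flip_nth lp_const)

lemma flip_X: "flip fls_X = fls_X_inv"
  by (intro fls_eqI) (simp add: flip_nth lp_X)

lemma flip_X_inv: "flip fls_X_inv = fls_X"
  by (intro fls_eqI) (simp add: flip_nth lp_X_inv)

lemma flip_mult: "lp f \<Longrightarrow> lp g \<Longrightarrow> flip (f * g) = flip f * flip g"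
proof (intro fls_eqI)
  fix n
  assume a: "lp f" "lp g"
  obtain M1 M2 where m: "\<forall>n>M1. f $$ n = 0" "\<forall>n>M2. g $$ n = 0" using a unfolding lp_def by blast
  obtain L1 where l1: "\<forall>n<L1. f $$ n = 0" by (elim fls_nth_vanishes_belowE)
  obtain L2 where l2: "\<forall>n<L2. g $$ n = 0" by (elim fls_nth_vanishes_belowE)
  have fl1: "\<forall>k< -M1. flip f $$ k = 0" "\<forall>k> -L1. flip f $$ k = 0" "\<forall>k< -M2. flip g $$ k = 0"
    using m l1 by (auto simp: flip_nth a)
  have "flip (f * g) $$ n = (\<Sum>i=L1..M1. f $$ i * g $$ (-n-i))"
    by (simp add: flip_nth lp_mult a fls_times_nth_support[OF l1 m(1) l2])
  also have "\<dots> = (\<Sum>i\<in>uminus ` {-M1..-L1}. f $$ i * g $$ (-n-i))"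
  proof -
    have "uminus ` {-M1..-L1} = {L1..M1}"
      by (auto simp: image_iff intro!: bexI[where x="- _"])
    then show ?thesis by simp
  qed
  also have "\<dots> = (\<Sum>i=-M1..-L1. f $$ (-i) * g $$ (-n+i))"
    by (subst sum.reindex) (auto simp: inj_on_def)
  also have "\<dots> = (flip f * flip g) $$ n"
    by (simp add: fls_times_nth_support[OF fl1] flip_nth a)
  finally show "flip (f * g) $$ n = (flip f * flip g) $$ n" .
qed

lemma flip_power: "lp f \<Longrightarrow> flip (f ^ n) = flip f ^ n"
  by (induction n) (auto simp: flip_mult lp_power flip_const[of 1, simplified])

lemma flip_sum: "finite A \<Longrightarrow> (\<And>i. i \<in> A \<Longrightarrow> lp (f i)) \<Longrightarrow> flip (\<Sum>i\<in>A. f i) = (\<Sum>i\<in>A. flip (f i))"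
  by (induction A rule: finite_induct) (auto simp: flip_add lp_sum flip_const[of 0, simplified])

lemma flip_deriv: "lp f \<Longrightarrow> fls_deriv (flip f) = - (fls_X_inv ^ 2 * flip (fls_deriv f))"
proof (intro fls_eqI)
  fix n :: int assume a: "lp f"
  define m where "m = -n-1"
  have e1: "- (n + 1) = m" "- (n+2) + 1 = m" "n + 1 = - m" "- (n + 2) = m - 1" unfolding m_def by simp_all
  have "fls_deriv (flip f) $$ n = of_int (n+1) * f $$ m" by (simp add: flip_nth a m_def)
  moreover have "(fls_X_inv ^ 2 * flip (fls_deriv f)) $$ n = of_int m * f $$ m"
  proof -
    have "(fls_X_inv ^ 2 * flip (fls_deriv f)) $$ n = flip (fls_deriv f) $$ (n + 2)"
      by (simp add: fls_X_inv_power_times_conv_shift)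
    also have "\<dots> = fls_deriv f $$ (- (n + 2))" by (simp add: flip_nth a lp_deriv)
    also have "\<dots> = of_int (- (n+2) + 1) * f $$ (- (n+2) + 1)" by (simp only: fls_deriv_nth)
    also have "- (n+2) + 1 = m" by (simp add: m_def)
    finally show ?thesis .
  qed
  ultimately show "fls_deriv (flip f) $$ n = (- (fls_X_inv ^ 2 * flip (fls_deriv f))) $$ n"
    by (simp add: e1(3))
qed

lemma flip_res: "lp h \<Longrightarrow> lp g \<Longrightarrow> fls_residue (flip h * fls_deriv (flip g)) = - fls_residue (h * fls_deriv g)"
proof -
  assume a: "lp h" "lp g"
  have "flip h * fls_deriv (flip g) = - (fls_X_inv ^ 2 * flip (h * fls_deriv g))"
    by (simp add: flip_deriv a flip_mult lp_deriv)
  then show ?thesis by (simp add: fls_X_inv_power_times_conv_shift flip_nth a lp_deriv lp_mult)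
qed

lemma flip_nth0: "lp f \<Longrightarrow> flip f $$ 0 = f $$ 0"
  by (simp add: flip_nth)

lemma flip_big: "flip (big \<gamma> a d) = small \<gamma> a d"
  by (intro fls_eqI) (auto simp: flip_nth lp_big big_nth small_nth)

lemma flip_small: "flip (small \<gamma> a d) = big \<gamma> a d"
  by (metis flip_big flip_flip lp_big)

lemma ev_nonzero:
  assumes "(c has_field_derivative D) (at 0)" "c 0 \<noteq> 0"
  shows "eventually (\<lambda>s. c s \<noteq> 0) (nhds 0)"
proof -
  have "isCont c 0" using DERIV_isCont[OF assms(1)] .
  then have "(c \<longlongrightarrow> c 0) (at 0)" by (simp add: isCont_def)
  then have "eventually (\<lambda>s. c s \<noteq> 0) (at 0)" using assms(2) tendsto_imp_eventually_ne by blast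
  then show ?thesis using assms(2) eventually_nhds_conv_at by blast
qed

lemma fdiff_cong_ev:
  assumes "f field_differentiable (at 0)" "eventually (\<lambda>s. f s = g s) (nhds 0)"
  shows "g field_differentiable (at 0)"
  using assms unfolding field_differentiable_def
  using DERIV_cong_ev[of 0 0 f g] by blast

lemma fd_inverse:
  assumes fdf: "fd f f'" and ev: "eventually (\<lambda>s. \<forall>n<m. f s $$ n = 0) (nhds 0)" and nz: "f 0 $$ m \<noteq> 0"
  shows "fd (\<lambda>s. inverse (f s)) (- f' * inverse (f 0) ^ 2)"
proof -
  define g where "g s = inverse (f s)" for s
  have ev2: "eventually (\<lambda>s. f s $$ m \<noteq> 0) (nhds 0)" using ev_nonzero[OF fd_nthD[OF fdf] nz] .
  have evs: "eventually (\<lambda>s. f s \<noteq> 0 \<and> fls_subdegree (f s) = m) (nhds 0)"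
    using eventually_conj[OF ev ev2] by (rule eventually_mono) (auto intro: fls_subdegree_eqI)
  have evg: "eventually (\<lambda>s. (\<forall>n< -m. g s $$ n = 0) \<and> f s * g s = 1 \<and> (\<forall>n<m. f s $$ n = 0)) (nhds 0)"
    using eventually_conj[OF evs ev] by (rule eventually_mono) (auto simp: g_def)
  have key: "(\<lambda>s. g s $$ (int k - m)) field_differentiable (at 0)" for k :: nat
  proof (induction k rule: less_induct)
    case (less k)
    define R where "R s = ((if k = 0 then 1 else 0) - (\<Sum>i\<in>{m+1..int k+m}. f s $$ i * g s $$ (int k - i))) / f s $$ m" for s
    have EV: "eventually (\<lambda>s. R s = g s $$ (int k - m)) (nhds 0)"
      using eventually_conj[OF evg ev2]
    proof (rule eventually_mono)
      fix s assume h: "((\<forall>n< -m. g s $$ n = 0) \<and> f s * g s = 1 \<and> (\<forall>n<m. f s $$ n = 0)) \<and> f s $$ m \<noteq> 0"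
      have l1: "\<forall>n<m. f s $$ n = 0" and l2: "\<forall>n< -m. g s $$ n = 0" using h by auto
      have "(f s * g s) $$ int k = (\<Sum>i=m..int k - -m. f s $$ i * g s $$ (int k - i))"
        by (rule fls_times_nth_bound[OF l1 l2])
      also have "\<dots> = f s $$ m * g s $$ (int k - m) + (\<Sum>i\<in>{m+1..int k+m}. f s $$ i * g s $$ (int k - i))"
      proof -
        have "{m..int k - -m} = insert m {m+1..int k+m}" by auto
        then show ?thesis by simp
      qed
      finally have "(if k = 0 then 1 else 0) = f s $$ m * g s $$ (int k - m) + (\<Sum>i\<in>{m+1..int k+m}. f s $$ i * g s $$ (int k - i))"
        using h by simp
      then have "f s $$ m * g s $$ (int k - m) = (if k = 0 then 1 else 0) - (\<Sum>i\<in>{m+1..int k+m}. f s $$ i * g s $$ (int k - i))"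
        by (simp add: algebra_simps)
      then have "R s = (f s $$ m * g s $$ (int k - m)) / f s $$ m" unfolding R_def by simp
      then show "R s = g s $$ (int k - m)" using h by simp
    qed
    have "R field_differentiable (at 0)"
      unfolding R_def
    proof (intro field_differentiable_divide field_differentiable_diff field_differentiable_sum field_differentiable_mult)
      show "(\<lambda>s. if k = 0 then 1 else 0) field_differentiable at 0" by simp
      show "(\<lambda>s. f s $$ m) field_differentiable at 0" using fd_nthD[OF fdf] field_differentiable_def by blast
      show "f 0 $$ m \<noteq> 0" by fact
      fix i assume i: "i \<in> {m+1..int k+m}"
      show "(\<lambda>s. f s $$ i) field_differentiable at 0" using fd_nthD[OF fdf] field_differentiable_def by blast
      have "nat (int k + m - i) < k" "int (nat (int k + m - i)) - m = int k - i" using i by auto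
      then show "(\<lambda>s. g s $$ (int k - i)) field_differentiable at 0" using less[of "nat (int k + m - i)"] by simp
    qed
    then show ?case using fdiff_cong_ev[OF _ EV] by simp
  qed
  have low: "eventually (\<lambda>s. g s $$ n = 0) (nhds 0)" if "n < -m" for n
    using evg by (rule eventually_mono) (use that in auto)
  have dlow: "((\<lambda>s. g s $$ n) has_field_derivative 0) (at 0)" if "n < -m" for n
    using DERIV_cong_ev[of 0 0 "\<lambda>s. g s $$ n" "\<lambda>s. 0" 0 0] low[OF that] by simp
  define g' where "g' = Abs_fls (\<lambda>n. deriv (\<lambda>s. g s $$ n) 0)"
  have g'n: "g' $$ n = deriv (\<lambda>s. g s $$ n) 0" for n
    unfolding g'_def by (rule nth_Abs_fls_lower_bound[of "-m"]) (use dlow DERIV_imp_deriv in blast)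
  have fdg: "fd g g'"
    unfolding fd_def
  proof (intro conjI exI allI)
    show "eventually (\<lambda>s. \<forall>n< -m. g s $$ n = 0) (nhds 0)" using evg by (rule eventually_mono) auto
    fix n
    show "((\<lambda>s. g s $$ n) has_field_derivative g' $$ n) (at 0)"
    proof (cases "n < -m")
      case True
      then have "g' $$ n = 0" using g'n DERIV_imp_deriv[OF dlow[OF True]] by simp
      then show ?thesis using dlow[OF True] by simp
    next
      case False
      then have "int (nat (n + m)) - m = n" by simp
      then have "(\<lambda>s. g s $$ n) field_differentiable (at 0)" using key[of "nat (n+m)"] by simp
      then show ?thesis unfolding g'n using DERIV_deriv_iff_field_differentiable by blast
    qed
  qed
  have "fd (\<lambda>s. f s * g s) (f' * g 0 + f 0 * g')" by (rule fd_mult[OF fdf fdg])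
  moreover have "eventually (\<lambda>s. f s * g s = 1) (nhds 0)" using evg by (rule eventually_mono) auto
  ultimately have "fd (\<lambda>s. 1) (f' * g 0 + f 0 * g')" by (rule fd_cong_ev)
  then have e0: "f' * g 0 + f 0 * g' = 0" using fd_unique[OF _ fd_const[of 1]] by simp
  have f0: "f 0 \<noteq> 0" using nz by auto
  have "g' = - f' * inverse (f 0) ^ 2"
  proof -
    from e0 have "f 0 * g' = - (f' * g 0)" by (simp add: eq_neg_iff_add_eq_0 add.commute)
    moreover have "g' = inverse (f 0) * (f 0 * g')" using f0 by (simp add: mult.assoc[symmetric])
    ultimately have "g' = inverse (f 0) * (- (f' * g 0))" by simp
    then show ?thesis by (simp add: g_def power2_eq_square)
  qed
  then show ?thesis using fdg unfolding g_def by simp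
qed

definition lowb :: "complex fls \<Rightarrow> int \<Rightarrow> bool" where "lowb f N \<longleftrightarrow> (\<forall>k<N. f $$ k = 0)"

lemma lowb_mult: "lowb f N1 \<Longrightarrow> lowb g N2 \<Longrightarrow> lowb (f * g) (N1 + N2)"
  unfolding lowb_def using fls_times_nth_bound[of N1 f N2 g] by auto

lemma lowb_mono: "lowb f N \<Longrightarrow> M \<le> N \<Longrightarrow> lowb f M"
  unfolding lowb_def by auto

lemma lowb_add: "lowb f N \<Longrightarrow> lowb g N \<Longrightarrow> lowb (f + g) N"
  unfolding lowb_def by auto

lemma lowb_diff: "lowb f N \<Longrightarrow> lowb g N \<Longrightarrow> lowb (f - g) N"
  unfolding lowb_def by auto

lemma lowb_uminus: "lowb f N \<Longrightarrow> lowb (- f) N"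
  unfolding lowb_def by auto

lemma lowb_res: "lowb f 0 \<Longrightarrow> fls_residue f = 0"
  unfolding lowb_def by simp

lemma lowb_subdeg: "lowb f (fls_subdegree f)"
  unfolding lowb_def by simp

lemma lowb_deriv: "lowb f N \<Longrightarrow> lowb (fls_deriv f) (N - 1)"
  unfolding lowb_def by simp

lemma lowb_const: "lowb (fls_const c) 0"
  unfolding lowb_def by simp

lemma lowb_zero: "lowb 0 N"
  unfolding lowb_def by simp

lemma lowb_sum: "(\<And>i. i \<in> I \<Longrightarrow> lowb (f i) N) \<Longrightarrow> lowb (\<Sum>i\<in>I. f i) N"
  unfolding lowb_def by (auto simp: fls_nth_sum)

lemma lowb_powi: "lowb (F powi k) (k * fls_subdegree F)"
  using lowb_subdeg[of "F powi k"] by simp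

lemma lowb_fps: "lowb (fps_to_fls f) 0"
  unfolding lowb_def by simp

lemma lowb_compose:
  assumes "lowb T N" "fps_nth H 0 = 0" "subdegree H = 1"
  shows "lowb (fls_compose_fps T H) N"
proof (cases "T = 0")
  case True then show ?thesis by (simp add: lowb_zero)
next
  case False
  then have "N \<le> fls_subdegree T" using assms(1) unfolding lowb_def by (intro fls_subdegree_geI) auto
  then show ?thesis using assms lowb_subdeg[of "fls_compose_fps T H"] lowb_mono by simp
qed

lemma lowb_big: "lowb (big \<gamma> a d) (-1)"
  unfolding lowb_def by (simp add: big_nth)

lemma lowb_small: "lowb (small \<gamma> b e) (- int e)"
  unfolding lowb_def by (simp add: small_nth)

lemma fls_compose_fps_X_right: "fls_compose_fps F fps_X = (F :: complex fls)"
proof -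
  have "fls_compose_fps F fps_X = fps_to_fls (fls_base_factor_to_fps F) * fps_to_fls fps_X powi fls_subdegree F"
    by (simp only: fls_compose_fps_def fps_compose_fps_X)
  also have "fps_to_fls fps_X = (fls_X :: complex fls)" by (intro fls_eqI) simp
  also have "fls_X powi fls_subdegree F = (fls_X_intpow (fls_subdegree F) :: complex fls)" by simp
  also have "fps_to_fls (fls_base_factor_to_fps F) * fls_X_intpow (fls_subdegree F) =
      fls_shift (- fls_subdegree F) (fps_to_fls (fls_base_factor_to_fps F))"
    by (rule fls_X_intpow_times_conv_shift(2))
  also have "\<dots> = F" by (rule fls_conv_base_factor_to_fps_shift_subdegree[symmetric])
  finally show ?thesis .
qed


lemma fls_compose_fps_sum:
  assumes "H \<noteq> 0" "fps_nth H 0 = 0"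
  shows "fls_compose_fps (\<Sum>i\<in>I. f i) H = (\<Sum>i\<in>I. fls_compose_fps (f i) H)"
  by (induction I rule: infinite_finite_induct) (auto simp: fls_compose_fps_add assms)

lemma res_sum: "fls_residue (\<Sum>i\<in>I. f i) = (\<Sum>i\<in>I. fls_residue (f i))"
  by (simp add: fls_nth_sum)

lemma res_cmult: "fls_residue (fls_const (c::complex) * f) = c * fls_residue f"
  by simp

lemma fls_X_intpow_nth: "(fls_X_intpow m :: complex fls) $$ k = (if k = m then 1 else 0)"
  by simp

locale side =
  fixes \<gamma> :: complex and a b :: "nat \<Rightarrow> complex" and d e :: nat
  assumes gnz: "\<gamma> \<noteq> 0"
begin

abbreviation A where "A \<equiv> big \<gamma> a d"
abbreviation B where "B \<equiv> small \<gamma> b e"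
definition w where "w = locpar A"
definition Xi where "Xi = fps_inv w"
definition tS where "tS = fres B A"
definition uS where "uS K = - fres (B * inverse A ^ K) A"
definition US where "US K = exp_coeff A B (- (int K + 1)) / of_nat K"
definition phiS where "phiS = Abs_fps (\<lambda>n. if n = 0 then 0 else - US n)"
definition PhiS where "PhiS = fps_to_fls (fps_compose phiS w)"
definition VS where "VS x = (\<Sum>K\<in>{1..e+1}. fls_const (uS K / of_nat K) * x ^ K)"
definition GS where "GS = VS A + PhiS"

lemma A_nz: "A \<noteq> 0" using big_nz[OF gnz] .
lemma A_sub: "fls_subdegree A = -1" using big_subdeg[OF gnz] .
lemma A_lead: "A $$ (-1) = \<gamma>" by (simp add: big_nth)
lemma iA_sub: "fls_subdegree (inverse A) = 1" by (simp add: A_sub)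
lemma iA_nz: "inverse A \<noteq> 0" using A_nz by simp
lemma iA_lead: "inverse A $$ 1 = inverse \<gamma>"
  using fls_inverse_base[OF A_nz] by (simp add: A_sub A_lead)
lemma A_powi_sub: "fls_subdegree (A powi k) = - k" by (simp add: A_sub)
lemma lowb_A_powi: "lowb (A powi k) (- k)" using lowb_subdeg[of "A powi k"] A_powi_sub by simp
lemma lowb_dA: "lowb (fls_deriv A) (-2)" using lowb_deriv[OF lowb_big[of \<gamma> a d]] by simp
lemma lowb_B: "lowb B (- int e)" by (rule lowb_small)

lemma w_fls: "fps_to_fls w = inverse A"
  unfolding w_def locpar_def by (rule fls_regpart_to_fls_trivial) (simp add: A_sub)
lemma w0: "w $ 0 = 0"
proof -
  have "fps_to_fls w $$ 0 = 0" unfolding w_fls using fls_eq0_below_subdegree[of 0 "inverse A"] iA_sub by simp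
  then show ?thesis by simp
qed
lemma w1: "w $ 1 = inverse \<gamma>"
proof -
  have "fps_to_fls w $$ 1 = inverse \<gamma>" unfolding w_fls by (simp add: iA_lead)
  then show ?thesis by simp
qed
lemma w1': "w $ Suc 0 = inverse \<gamma>" using w1 by simp
lemma w_nz: "w \<noteq> 0" using w1 gnz by auto
lemma w_subdeg: "subdegree w = 1"
  by (rule subdegreeI) (use w0 w1 gnz in \<open>auto simp: less_Suc_eq_0_disj\<close>)
lemma Xi0: "Xi $ 0 = 0" unfolding Xi_def fps_inv_def by simp
lemma Xi1: "Xi $ 1 = \<gamma>" unfolding Xi_def fps_inv_def using w1' gnz by (simp add: divide_inverse)
lemma Xi_nz: "Xi \<noteq> 0" using Xi1 gnz by auto
lemma Xi_w: "Xi oo w = fps_X" unfolding Xi_def using fps_inv[of w] w0 w1' gnz by simp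
lemma back_comp: "fls_compose_fps (fls_compose_fps f Xi) w = f"
  using fls_compose_fps_assoc[OF Xi_nz Xi0 w_nz w0] Xi_w fls_compose_fps_X_right by simp

lemma compose_intpow: "fls_compose_fps (fls_X_intpow m) w = A powi (- m)"
proof -
  have h: "fls_compose_fps (fls_X powi m) w = fls_compose_fps fls_X w powi m"
    by (rule fls_compose_fps_powi[OF w_nz w0])
  then have "fls_compose_fps (fls_X_intpow m) w = fps_to_fls w powi m" by simp
  then show ?thesis by (simp add: w_fls power_int_inverse power_int_minus)
qed

lemma DEC:
  assumes "lowb g N0"
  shows "\<exists>T. fls_compose_fps g w = (\<Sum>m\<in>{N0..N}. fls_const (g $$ m) * A powi (- m)) + T \<and> lowb T (N+1)"
proof -
  define P0 where "P0 = (\<Sum>m\<in>{N0..N}. fls_const (g $$ m) * fls_X_intpow m)"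
  define T0 where "T0 = g - P0"
  have P0n: "P0 $$ k = (if N0 \<le> k \<and> k \<le> N then g $$ k else 0)" for k
  proof -
    have "P0 $$ k = (\<Sum>m\<in>{N0..N}. if k = m then g $$ m else 0)"
      unfolding P0_def by (simp add: fls_nth_sum if_distrib cong: if_cong)
    also have "\<dots> = (if N0 \<le> k \<and> k \<le> N then g $$ k else 0)"
      by (simp add: sum.delta[OF finite_atLeastAtMost] eq_commute[of k])
    finally show ?thesis .
  qed
  have lT0: "lowb T0 (N+1)" unfolding lowb_def T0_def using assms unfolding lowb_def by (auto simp: P0n)
  have "fls_compose_fps g w = fls_compose_fps P0 w + fls_compose_fps T0 w"
    unfolding T0_def by (simp add: fls_compose_fps_add[OF w_nz w0, symmetric])
  also have "fls_compose_fps P0 w = (\<Sum>m\<in>{N0..N}. fls_const (g $$ m) * A powi (- m))"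
    unfolding P0_def by (simp add: fls_compose_fps_sum[OF w_nz w0] fls_compose_fps_mult[OF w_nz w0] compose_intpow
       del: fls_shift_nth)
  finally show ?thesis using lowb_compose[OF lT0 w0 w_subdeg] by blast
qed

lemma RES: "fls_compose_fps f Xi $$ n = - fls_residue (f * A powi (n - 1) * fls_deriv A)"
proof -
  define g where "g = fls_compose_fps f Xi"
  define N0 where "N0 = min n (fls_subdegree g)"
  have lg: "lowb g N0" unfolding N0_def using lowb_subdeg[of g] lowb_mono by simp
  obtain T where T: "f = (\<Sum>m\<in>{N0..n}. fls_const (g $$ m) * A powi (- m)) + T" "lowb T (n+1)"
    using DEC[OF lg, of n] back_comp[of f] unfolding g_def by auto
  have rT: "fls_residue (T * A powi (n - 1) * fls_deriv A) = 0"
    by (rule lowb_res) (use lowb_mult[OF lowb_mult[OF T(2) lowb_A_powi[of "n-1"]] lowb_dA] in simp)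
  have tm: "fls_const (g $$ m) * A powi (- m) * A powi (n - 1) * fls_deriv A =
      fls_const (g $$ m) * (A powi (- m + (n - 1)) * fls_deriv A)" for m
    by (simp only: power_int_add[OF disjI1[OF A_nz]] mult.assoc)
  have "f * A powi (n - 1) * fls_deriv A =
     (\<Sum>m\<in>{N0..n}. fls_const (g $$ m) * (A powi (- m + (n - 1)) * fls_deriv A)) + T * A powi (n - 1) * fls_deriv A"
    unfolding T(1) distrib_right sum_distrib_right tm ..
  then have "fls_residue (f * A powi (n - 1) * fls_deriv A) =
     (\<Sum>m\<in>{N0..n}. g $$ m * fls_residue (A powi (- m + (n - 1)) * fls_deriv A))"
    using rT by (simp only: fls_residue_add res_sum res_cmult) simp
  also have "\<dots> = (\<Sum>m\<in>{N0..n}. if m = n then - g $$ m else 0)"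
    by (intro sum.cong refl) (simp add: res_powi_deriv[OF A_nz] A_sub del: fls_residue_def)
  also have "\<dots> = - g $$ n" using N0_def by simp
  finally show ?thesis unfolding g_def by simp
qed

lemma US_formula: "US K = - fres (B * A ^ K) A / of_nat K"
proof -
  have "exp_coeff A B (- (int K + 1)) = fls_compose_fps B Xi $$ (int K + 1)"
    unfolding exp_coeff_def Xi_def w_def by (simp add: add.commute)
  also have "\<dots> = - fls_residue (B * A powi (int K) * fls_deriv A)" by (simp add: RES)
  finally show ?thesis unfolding US_def fres_def by (simp add: mult.assoc)
qed

lemma uS_formula: "uS K = - fls_residue (B * A powi (- int K) * fls_deriv A)"
  unfolding uS_def fres_def by (simp add: power_int_minus power_inverse mult.assoc)

lemma PhiS_compose: "PhiS = fls_compose_fps (fps_to_fls phiS) w"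
  unfolding PhiS_def using fls_compose_fps_to_fls[OF w_nz w0] by simp

lemma PHI:
  assumes "lowb C (- int N - 1)"
  shows "fls_residue (PhiS * C) = - (\<Sum>k\<in>{1..N}. US k * fls_residue (A powi (- int k) * C))"
proof -
  obtain T where T: "PhiS = (\<Sum>m\<in>{0..int N}. fls_const (fps_to_fls phiS $$ m) * A powi (- m)) + T" "lowb T (int N+1)"
    using DEC[OF lowb_fps[of phiS], of "int N"] PhiS_compose by auto
  have rT: "fls_residue (T * C) = 0"
    by (rule lowb_res) (use lowb_mult[OF T(2) assms] in simp)
  have "PhiS * C = (\<Sum>m\<in>{0..int N}. fls_const (fps_to_fls phiS $$ m) * (A powi (- m) * C)) + T * C"
    unfolding T(1) distrib_right sum_distrib_right mult.assoc ..
  then have "fls_residue (PhiS * C) = (\<Sum>m\<in>{0..int N}. fps_to_fls phiS $$ m * fls_residue (A powi (- m) * C))"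
    using rT by (simp only: fls_residue_add res_sum res_cmult) simp
  also have "\<dots> = (\<Sum>k\<in>{0..N}. fps_to_fls phiS $$ int k * fls_residue (A powi (- int k) * C))"
  proof -
    have "{0..int N} = int ` {0..N}" by (simp add: image_int_atLeastAtMost)
    then show ?thesis by (simp add: sum.reindex del: fls_residue_def)
  qed
  also have "\<dots> = (\<Sum>k\<in>{1..N}. - US k * fls_residue (A powi (- int k) * C))"
  proof -
    have "{0..N} = insert 0 {1..N}" by auto
    then show ?thesis by (simp add: phiS_def)
  qed
  finally show ?thesis by (simp add: sum_negf)
qed

lemma PART1: "fres (B * PhiS) A = (\<Sum>K\<in>{1..e+1}. uS K * US K)"
proof -
  have l: "lowb (B * fls_deriv A) (- int (e+1) - 1)" by (rule lowb_mono[OF lowb_mult[OF lowb_B lowb_dA]]) simp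
  have "fres (B * PhiS) A = fls_residue (PhiS * (B * fls_deriv A))" unfolding fres_def by (simp add: ac_simps)
  also have "\<dots> = - (\<Sum>k\<in>{1..e+1}. US k * fls_residue (A powi (- int k) * (B * fls_deriv A)))"
    by (rule PHI[OF l])
  also have "\<dots> = (\<Sum>K\<in>{1..e+1}. uS K * US K)"
    by (simp add: uS_formula sum_negf[symmetric] ac_simps)
  finally show ?thesis .
qed

end

lemma UNIQ:
  fixes A D :: "complex fls"
  assumes "A \<noteq> 0" "fls_subdegree A = -1" "\<forall>m. fls_residue (D * A powi m) = 0"
  shows "D = 0"
proof (rule ccontr)
  assume D: "D \<noteq> 0"
  define m where "m = fls_subdegree D + 1"
  have nz: "D * A powi m \<noteq> 0" using D assms(1) by simp
  have "fls_subdegree (D * A powi m) = -1" using D assms(1,2) by (simp add: m_def)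
  then have "(D * A powi m) $$ (-1) \<noteq> 0" using nth_fls_subdegree_nonzero[OF nz] by simp
  then show False using assms(3) by simp
qed

context side
begin

lemma Ap_mult: "A powi k * A powi l = A powi (k + l)"
  using power_int_add[of A k l] A_nz by simp

lemma Ap_inv: "inverse A = A powi (-1)" by (simp add: power_int_minus)

lemma fls_residue_diff: "fls_residue (f - g) = fls_residue f - fls_residue (g :: complex fls)"
  by simp

lemma resA: "fls_residue (A powi k * fls_deriv A) = (if k = -1 then -1 else 0)"
  using res_powi_deriv[OF A_nz, of k] by (simp add: A_sub)

lemma uS_vanish: "K \<ge> e + 2 \<Longrightarrow> uS K = 0"
proof -
  assume K: "K \<ge> e + 2"
  have "lowb (B * A powi (- int K) * fls_deriv A) (- int e + int K + -2)"
    using lowb_mult[OF lowb_mult[OF lowb_B lowb_A_powi[of "- int K"]] lowb_dA] by simp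
  then have "lowb (B * A powi (- int K) * fls_deriv A) 0" by (rule lowb_mono) (use K in simp)
  then show ?thesis unfolding uS_formula by (simp add: lowb_res del: fls_residue_def)
qed

lemma res_B_powi:
  "fls_residue (B * A powi m * fls_deriv A) =
     (if m \<ge> 1 then - of_int m * US (nat m) else if m = 0 then tS else - uS (nat (- m)))"
proof -
  consider "m \<ge> 1" | "m = 0" | "m \<le> -1" by linarith
  then show ?thesis
  proof cases
    case 1
    then have "A ^ nat m = A powi m" by (simp add: power_int_def)
    then have "US (nat m) = - fls_residue (B * A powi m * fls_deriv A) / of_int m"
      unfolding US_formula fres_def using 1 by (simp add: mult.assoc del: fls_residue_def)
    then show ?thesis using 1 by simp
  next
    case 2 then show ?thesis unfolding tS_def fres_def by simp
  next
    case 3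
    then show ?thesis unfolding uS_formula by simp
  qed
qed

lemma res_VS_deriv:
  "fls_residue (fls_deriv (VS A) * A powi m) = (if 1 \<le> - m \<and> - m \<le> int e + 1 then - uS (nat (- m)) else 0)"
proof -
  have "fls_deriv (VS A) * A powi m = (\<Sum>K\<in>{1..e+1}. fls_const (uS K) * (A powi (int K - 1 + m) * fls_deriv A))"
  proof -
    have t: "fls_deriv (fls_const (uS K / of_nat K) * A ^ K) * A powi m =
        fls_const (uS K) * (A powi (int K - 1 + m) * fls_deriv A)" if "K \<in> {1..e+1}" for K
    proof -
      have "fls_deriv (A ^ K) = fls_deriv (A powi int K)" by simp
      also have "\<dots> = of_int (int K) * A powi (int K - 1) * fls_deriv A" by (rule fls_deriv_powi)
      finally have "fls_deriv (fls_const (uS K / of_nat K) * A ^ K) * A powi m =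
          fls_const (uS K / of_nat K) * of_nat K * (A powi (int K - 1) * A powi m * fls_deriv A)"
        by (simp add: ac_simps)
      also have "fls_const (uS K / of_nat K) * of_nat K = fls_const (uS K)"
        using that by (simp add: fls_of_nat fls_const_mult_const)
      also have "A powi (int K - 1) * A powi m = A powi (int K - 1 + m)"
        by (simp add: power_int_add A_nz)
      finally show ?thesis by (simp add: mult.assoc)
    qed
    show ?thesis unfolding VS_def fls_deriv_sum sum_distrib_right using t by (intro sum.cong refl) 
  qed
  then have "fls_residue (fls_deriv (VS A) * A powi m) = (\<Sum>K\<in>{1..e+1}. uS K * (if int K - 1 + m = -1 then -1 else 0))"
    by (simp only: res_sum res_cmult resA)
  also have "\<dots> = (\<Sum>K\<in>{1..e+1}. if K = nat (- m) then - uS K else 0)"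
    by (intro sum.cong refl) auto
  also have "\<dots> = (if 1 \<le> - m \<and> - m \<le> int e + 1 then - uS (nat (- m)) else 0)"
    by (simp add: sum.delta[OF finite_atLeastAtMost]) linarith
  finally show ?thesis .
qed

lemma res_PhiS_deriv:
  "fls_residue (fls_deriv PhiS * A powi m) = (if m \<ge> 1 then - of_int m * US (nat m) else 0)"
proof -
  have "fls_residue (fls_deriv PhiS * A powi m) = - fls_residue (PhiS * fls_deriv (A powi m))"
    by (rule fls_residue_times_deriv)
  also have "fls_deriv (A powi m) = fls_const (of_int m) * (A powi (m - 1) * fls_deriv A)"
    by (simp add: fls_deriv_powi fls_of_int mult.assoc)
  also have "fls_residue (PhiS * (fls_const (of_int m) * (A powi (m - 1) * fls_deriv A))) =
      of_int m * fls_residue (PhiS * (A powi (m - 1) * fls_deriv A))"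
    by (simp only: mult.left_commute[of PhiS] res_cmult)
  also have "fls_residue (PhiS * (A powi (m - 1) * fls_deriv A)) =
      - (\<Sum>k\<in>{1..nat m}. US k * fls_residue (A powi (- int k) * (A powi (m - 1) * fls_deriv A)))"
  proof (rule PHI)
    have "lowb (A powi (m - 1) * fls_deriv A) (- (m - 1) + -2)" by (rule lowb_mult[OF lowb_A_powi lowb_dA])
    then show "lowb (A powi (m - 1) * fls_deriv A) (- int (nat m) - 1)" by (rule lowb_mono) simp
  qed
  also have "(\<Sum>k\<in>{1..nat m}. US k * fls_residue (A powi (- int k) * (A powi (m - 1) * fls_deriv A))) =
      (\<Sum>k\<in>{1..nat m}. if k = nat m then - US k else 0)"
  proof (intro sum.cong refl)
    fix k assume k: "k \<in> {1..nat m}"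
    have "A powi (- int k) * (A powi (m - 1) * fls_deriv A) = A powi (- int k + (m - 1)) * fls_deriv A"
      by (simp only: mult.assoc[symmetric] Ap_mult)
    then show "US k * fls_residue (A powi (- int k) * (A powi (m - 1) * fls_deriv A)) = (if k = nat m then - US k else 0)"
      using k by (simp only: resA) auto
  qed
  also have "\<dots> = (if m \<ge> 1 then - US (nat m) else 0)"
    by (simp add: sum.delta'[OF finite_atLeastAtMost]) linarith
  finally show ?thesis by auto
qed

lemma GS_deriv: "fls_deriv GS = (B + fls_const tS * inverse A) * fls_deriv A"
proof -
  define DD where "DD = fls_deriv GS - (B + fls_const tS * inverse A) * fls_deriv A"
  have "fls_residue (DD * A powi m) = 0" for m
  proof -
    have i: "inverse A * fls_deriv A * A powi m = A powi (m - 1) * fls_deriv A"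
    proof -
      have "inverse A * fls_deriv A * A powi m = A powi (-1) * A powi m * fls_deriv A"
        unfolding Ap_inv by (simp only: ac_simps)
      also have "\<dots> = A powi (m - 1) * fls_deriv A" unfolding Ap_mult by simp
      finally show ?thesis .
    qed
    have "DD * A powi m = fls_deriv (VS A) * A powi m + fls_deriv PhiS * A powi m
        - (B * A powi m * fls_deriv A + fls_const tS * (inverse A * fls_deriv A * A powi m))"
      unfolding DD_def GS_def fls_deriv_add by (simp only: ring_distribs) (simp only: ac_simps)
    then have "fls_residue (DD * A powi m) = fls_residue (fls_deriv (VS A) * A powi m) + fls_residue (fls_deriv PhiS * A powi m)
        - (fls_residue (B * A powi m * fls_deriv A) + tS * fls_residue (A powi (m - 1) * fls_deriv A))"
      unfolding i by (simp only: fls_residue_add res_cmult fls_residue_diff)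
    also have "\<dots> = 0"
    proof -
      consider "m \<ge> 1" | "m = 0" | "m \<le> -1" "- m \<le> int e + 1" | "- m > int e + 1" by linarith
      then show ?thesis
      proof cases
        case 1 then show ?thesis unfolding res_VS_deriv res_PhiS_deriv res_B_powi resA by simp
      next
        case 2 then show ?thesis unfolding res_VS_deriv res_PhiS_deriv res_B_powi resA by simp
      next
        case 3 then show ?thesis unfolding res_VS_deriv res_PhiS_deriv res_B_powi resA by simp
      next
        case 4
        then have "uS (nat (- m)) = 0" using uS_vanish[of "nat (-m)"] by linarith
        then show ?thesis using 4 unfolding res_VS_deriv res_PhiS_deriv res_B_powi resA by simp
      qed
    qed
    finally show ?thesis .
  qed
  then have "DD = 0" using UNIQ[OF A_nz A_sub] by blast
  then show ?thesis unfolding DD_def by simp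
qed

lemma PhiS_low: "lowb PhiS 1"
proof -
  have "(phiS oo w) $ 0 = 0" by (simp add: phiS_def)
  then show ?thesis unfolding PhiS_def lowb_def by (auto simp: not_less)
qed

lemma lowb_iA: "lowb (inverse A) 1"
  using lowb_A_powi[of "-1"] unfolding Ap_inv by simp

lemma res_GS_log: "fls_residue (GS * (fls_deriv A * inverse A)) = 0"
proof -
  have inv: "inverse A = A powi (-1)" by (simp add: power_int_minus)
  have t: "fls_const c * A ^ K * (fls_deriv A * A powi (-1)) = fls_const c * (A powi (int K - 1) * fls_deriv A)" for c K
  proof -
    have eq: "A ^ K * A powi (-1) = A powi (int K - 1)" using Ap_mult[of "int K" "-1"] by simp
    have "fls_const c * A ^ K * (fls_deriv A * A powi (-1)) = fls_const c * ((A ^ K * A powi (-1)) * fls_deriv A)"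
      by (simp only: ac_simps)
    then show ?thesis by (simp only: eq)
  qed
  have v: "VS A * (fls_deriv A * inverse A) = (\<Sum>K\<in>{1..e+1}. fls_const (uS K / of_nat K) * (A powi (int K - 1) * fls_deriv A))"
    unfolding VS_def sum_distrib_right inv mult.assoc[symmetric] t[unfolded mult.assoc[symmetric]] ..
  have "fls_residue (VS A * (fls_deriv A * inverse A)) = 0"
    unfolding v res_sum res_cmult resA by (intro sum.neutral) auto
  moreover have "fls_residue (PhiS * (fls_deriv A * inverse A)) = 0"
    by (rule lowb_res) (use lowb_mult[OF PhiS_low lowb_mult[OF lowb_dA lowb_iA]] in simp)
  ultimately show ?thesis unfolding GS_def distrib_right fls_residue_add by simp
qed

lemma GS_nth0: "GS $$ 0 = VS A $$ 0"
  unfolding GS_def PhiS_def by (simp add: phiS_def)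

lemma GS_pair:
  assumes "lowb \<Omega> (- int (e+1) - 1)"
  shows "- fls_residue (GS * \<Omega>) = (\<Sum>K\<in>{1..e+1}. uS K * (- fls_residue (A ^ K * \<Omega>) / of_nat K))
     - (\<Sum>K\<in>{1..e+1}. US K * (- fls_residue (A powi (- int K) * \<Omega>)))"
proof -
  have "fls_residue (VS A * \<Omega>) = (\<Sum>K\<in>{1..e+1}. uS K / of_nat K * fls_residue (A ^ K * \<Omega>))"
    unfolding VS_def sum_distrib_right by (simp only: res_sum mult.assoc res_cmult)
  moreover have "fls_residue (PhiS * \<Omega>) = - (\<Sum>k\<in>{1..e+1}. US k * fls_residue (A powi (- int k) * \<Omega>))"
    by (rule PHI[OF assms])
  moreover have "(\<Sum>K\<in>{1..e+1}. uS K * (- fls_residue (A ^ K * \<Omega>) / of_nat K)) =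
      - (\<Sum>K\<in>{1..e+1}. uS K / of_nat K * fls_residue (A ^ K * \<Omega>))"
    unfolding sum_negf[symmetric] by (intro sum.cong refl) simp
  moreover have "(\<Sum>K\<in>{1..e+1}. US K * (- fls_residue (A powi (- int K) * \<Omega>))) =
      - (\<Sum>K\<in>{1..e+1}. US K * fls_residue (A powi (- int K) * \<Omega>))"
    unfolding sum_negf[symmetric] by (intro sum.cong refl) simp
  ultimately show ?thesis unfolding GS_def distrib_right fls_residue_add by simp
qed

end

lemma res_times_X_inv: "fls_residue (f * fls_X_inv) = (f :: complex fls) $$ 0"
  by (simp add: fls_X_inv_times_conv_shift)

lemma res_X_inv_times: "fls_residue (fls_X_inv * f) = (f :: complex fls) $$ 0"
  by (simp add: fls_X_inv_times_conv_shift)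

lemma IBP1:
  fixes A B dA dB P dP :: "complex fls"
  assumes "dP * fls_deriv A = fls_deriv P * dA"
  shows "fls_residue (dB * P * fls_deriv A + B * dP * fls_deriv A + B * P * fls_deriv dA) =
         fls_residue (P * (dB * fls_deriv A - dA * fls_deriv B))"
proof -
  have e: "B * dP * fls_deriv A = B * fls_deriv P * dA" using assms by (simp add: mult.assoc)
  have "dB * P * fls_deriv A + B * dP * fls_deriv A + B * P * fls_deriv dA =
        P * (dB * fls_deriv A - dA * fls_deriv B) + fls_deriv (B * P * dA)"
    unfolding e by (simp add: algebra_simps)
  then show ?thesis by (simp only: fls_residue_add fls_residue_deriv) simp
qed

lemma IBP2:
  fixes A B dA dB :: "complex fls"
  shows "fls_residue (dB * B * A * fls_deriv A + B * dB * A * fls_deriv A + B * B * dA * fls_deriv A + B * B * A * fls_deriv dA) =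
         2 * fls_residue (B * A * (dB * fls_deriv A - dA * fls_deriv B))"
proof -
  have "dB * B * A * fls_deriv A + B * dB * A * fls_deriv A + B * B * dA * fls_deriv A + B * B * A * fls_deriv dA =
        fls_const 2 * (B * A * (dB * fls_deriv A - dA * fls_deriv B)) + fls_deriv (B * B * A * dA)"
    by (simp add: algebra_simps flip: fls_const_numeral)
  then show ?thesis by (simp only: fls_residue_add fls_residue_deriv res_cmult) simp
qed

context side
begin

definition mm where "mm = inverse A * fls_deriv A + fls_X_inv"

lemma mm_low: "lowb mm 0"
proof -
  have l: "lowb (inverse A * fls_deriv A) (-1)" using lowb_mult[OF lowb_iA lowb_dA] by simp
  have r: "(inverse A * fls_deriv A) $$ (-1) = -1"
    using fls_residue_deriv_times_inverse_eq_subdegree(2)[of A] A_sub by simp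
  show ?thesis unfolding lowb_def mm_def
  proof safe
    fix k :: int assume k: "k < 0"
    show "(inverse A * fls_deriv A + fls_X_inv) $$ k = 0"
    proof (cases "k = -1")
      case True then show ?thesis using r by simp
    next
      case False then show ?thesis using l k unfolding lowb_def by simp
    qed
  qed
qed

lemma H_low:
  assumes "fls_deriv h = fls_const c * mm" "h $$ 0 = 0"
  shows "lowb h 0"
  unfolding lowb_def
proof safe
  fix n :: int assume n: "n < 0"
  have "fls_deriv h $$ (n - 1) = of_int n * h $$ n" by simp
  moreover have "fls_deriv h $$ (n - 1) = 0" using mm_low n unfolding assms(1) lowb_def by simp
  ultimately show "h $$ n = 0" using n by simp
qed

lemma H_deriv:
  assumes S': "fls_deriv S = B * fls_deriv A - fls_const tS * fls_X_inv"
  shows "fls_deriv (GS - S) = fls_const tS * mm"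
  unfolding fls_deriv_sub GS_deriv S' mm_def by (simp add: algebra_simps)

lemma C1:
  assumes S': "fls_deriv S = B * fls_deriv A - fls_const tS * fls_X_inv"
  shows "GS $$ 0 - S $$ 0 = fls_residue (S * (fls_deriv A * inverse A))"
proof -
  define H where "H = GS - S"
  define h where "h = H - fls_const (H $$ 0)"
  have hd: "fls_deriv h = fls_const tS * mm" unfolding h_def H_def using H_deriv[OF S'] by simp
  have lh: "lowb h 0" by (rule H_low[OF hd]) (simp add: h_def)
  have "fls_residue (H * mm) = H $$ 0 * fls_residue mm + fls_residue (h * mm)"
  proof -
    have "H * mm = fls_const (H $$ 0) * mm + h * mm" unfolding h_def by (simp add: algebra_simps)
    then show ?thesis by (simp only: fls_residue_add res_cmult)
  qed
  also have "\<dots> = 0" using lowb_res[OF mm_low] lowb_res[of "h * mm"] lowb_mult[OF lh mm_low] by simp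
  finally have r1: "fls_residue (H * mm) = 0" .
  have "fls_deriv A * inverse A = mm - fls_X_inv" unfolding mm_def by (simp add: mult.commute)
  then have "fls_residue (H * (fls_deriv A * inverse A)) = fls_residue (H * mm) - H $$ 0"
    by (simp only: right_diff_distrib fls_residue_diff res_times_X_inv)
  also have "\<dots> = - H $$ 0" using r1 by simp
  finally have r2: "fls_residue (H * (fls_deriv A * inverse A)) = - H $$ 0" .
  have "fls_residue (H * (fls_deriv A * inverse A)) = fls_residue (GS * (fls_deriv A * inverse A)) - fls_residue (S * (fls_deriv A * inverse A))"
    unfolding H_def by (simp only: left_diff_distrib fls_residue_diff)
  then have "- fls_residue (S * (fls_deriv A * inverse A)) = - (GS $$ 0 - S $$ 0)"
    using r2 res_GS_log unfolding H_def by (simp del: fls_residue_def)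
  then show ?thesis by (simp only: neg_equal_iff_equal)
qed

lemma SIG2:
  assumes S': "fls_deriv S = B * fls_deriv A - fls_const tS * fls_X_inv"
    and dS': "fls_deriv dS = dB * fls_deriv A + B * fls_deriv dA - fls_const dt * fls_X_inv"
  shows "- fls_residue (GS * (dB * fls_deriv A - dA * fls_deriv B)) =
     - fls_residue (S * (dB * fls_deriv A - dA * fls_deriv B))
     + tS * fls_residue ((dS - B * dA) * (fls_deriv A * inverse A)) + tS * (dS - B * dA) $$ 0
     - (GS $$ 0 - S $$ 0) * dt"
proof -
  define H where "H = GS - S"
  define W where "W = dS - B * dA"
  define \<Omega> where "\<Omega> = dB * fls_deriv A - dA * fls_deriv B"
  have Hd: "fls_deriv H = fls_const tS * mm" unfolding H_def by (rule H_deriv[OF S'])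
  have Wd: "\<Omega> = fls_deriv W + fls_const dt * fls_X_inv"
    unfolding W_def \<Omega>_def fls_deriv_sub dS' by (simp add: algebra_simps)
  have "fls_residue (H * \<Omega>) = fls_residue (H * fls_deriv W) + dt * H $$ 0"
    unfolding Wd by (simp only: distrib_left fls_residue_add mult.left_commute[of H] res_cmult res_times_X_inv)
  also have "fls_residue (H * fls_deriv W) = - fls_residue (fls_deriv H * W)"
    using fls_residue_times_deriv[of H W] by simp
  also have "fls_residue (fls_deriv H * W) = tS * (fls_residue (W * (fls_deriv A * inverse A)) + W $$ 0)"
  proof -
    have "fls_deriv H * W = fls_const tS * (W * (fls_deriv A * inverse A) + fls_X_inv * W)"
      unfolding Hd mm_def by (simp add: algebra_simps)
    then show ?thesis by (simp only: res_cmult fls_residue_add res_X_inv_times)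
  qed
  finally have "fls_residue (H * \<Omega>) = - (tS * (fls_residue (W * (fls_deriv A * inverse A)) + W $$ 0)) + dt * H $$ 0" .
  moreover have "fls_residue (GS * \<Omega>) = fls_residue (S * \<Omega>) + fls_residue (H * \<Omega>)"
    unfolding H_def by (simp only: left_diff_distrib fls_residue_diff) simp
  ultimately show ?thesis unfolding W_def \<Omega>_def H_def by (simp add: algebra_simps)
qed

lemma SIG3:
  assumes S': "fls_deriv S = B * fls_deriv A - fls_const tS * fls_X_inv"
  shows "fls_residue (dS * (fls_deriv A * inverse A) + S * (fls_deriv dA * inverse A + fls_deriv A * (- dA * inverse A ^ 2))) =
     fls_residue ((dS - B * dA) * (fls_deriv A * inverse A)) + tS * (dA * inverse A) $$ 0"
proof -
  have d: "fls_deriv dA * inverse A + fls_deriv A * (- dA * inverse A ^ 2) = fls_deriv (dA * inverse A)"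
    by (simp add: fls_inverse_deriv algebra_simps)
  have "fls_residue (S * fls_deriv (dA * inverse A)) = - fls_residue (fls_deriv S * (dA * inverse A))"
    using fls_residue_times_deriv[of S "dA * inverse A"] by simp
  also have "fls_deriv S * (dA * inverse A) = B * dA * (fls_deriv A * inverse A) - fls_const tS * (fls_X_inv * (dA * inverse A))"
    unfolding S' by (simp add: algebra_simps)
  also have "fls_residue \<dots> = fls_residue (B * dA * (fls_deriv A * inverse A)) - tS * (dA * inverse A) $$ 0"
    by (simp only: fls_residue_diff res_cmult res_X_inv_times)
  finally have "fls_residue (S * fls_deriv (dA * inverse A)) = - fls_residue (B * dA * (fls_deriv A * inverse A)) + tS * (dA * inverse A) $$ 0"
    by simp
  then show ?thesis unfolding d left_diff_distrib distrib_left fls_residue_add fls_residue_diff by simp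
qed

lemma dA_iA0: "(big \<gamma>' a' d' * inverse A) $$ 0 = \<gamma>' / \<gamma>"
proof -
  have "(big \<gamma>' a' d' * inverse A) $$ 0 = (\<Sum>i=-1..0-1. big \<gamma>' a' d' $$ i * inverse A $$ (0 - i))"
    using fls_times_nth_bound[of "-1" "big \<gamma>' a' d'" 1 "inverse A" 0] lowb_big lowb_iA unfolding lowb_def by blast
  also have "\<dots> = \<gamma>' * inverse \<gamma>" by (simp add: big_nth iA_lead)
  finally show ?thesis by (simp add: divide_inverse)
qed

lemma lowb_Om: "lowb (small \<gamma>' b' e * fls_deriv A - big \<gamma>' a' d' * fls_deriv B) (- int (e+1) - 1)"
proof (rule lowb_diff)
  show "lowb (small \<gamma>' b' e * fls_deriv A) (- int (e + 1) - 1)"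
    by (rule lowb_mono[OF lowb_mult[OF lowb_small lowb_dA]]) simp
  show "lowb (big \<gamma>' a' d' * fls_deriv B) (- int (e + 1) - 1)"
    by (rule lowb_mono[OF lowb_mult[OF lowb_big lowb_deriv[OF lowb_B]]]) simp
qed

end

lemma res_diff: "fls_residue (f - g) = fls_residue f - fls_residue (g :: complex fls)"
  by simp

lemma Xinv2_X2: "fls_X_inv ^ 2 * fls_X ^ 2 = (1 :: complex fls)"
  by (intro fls_eqI) (simp add: fls_X_inv_power_times_conv_shift)

lemma Xinv2_X: "fls_X_inv ^ 2 * fls_X = (fls_X_inv :: complex fls)"
  by (intro fls_eqI) (simp add: fls_X_inv_power_times_conv_shift)

lemma flip_deriv_inv: "lp g \<Longrightarrow> flip (fls_deriv g) = - (fls_X ^ 2 * fls_deriv (flip g))"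
proof -
  assume g: "lp g"
  have "fls_X ^ 2 * fls_deriv (flip g) = - ((fls_X_inv ^ 2 * fls_X ^ 2) * flip (fls_deriv g))"
    by (simp add: flip_deriv[OF g] algebra_simps)
  then show ?thesis by (simp add: Xinv2_X2)
qed

lemma flip_mult_deriv: "lp f \<Longrightarrow> lp g \<Longrightarrow> flip (f * fls_deriv g) = - (fls_X ^ 2 * (flip f * fls_deriv (flip g)))"
  by (simp add: flip_mult lp_deriv flip_deriv_inv algebra_simps)

lemma deriv_flip_X: "lp h \<Longrightarrow> fls_deriv (flip h) = - (fls_X_inv ^ 2 * flip (fls_deriv h))"
  by (rule flip_deriv)

lemma flip_res_gen:
  "lp X \<Longrightarrow> lp f \<Longrightarrow> lp g \<Longrightarrow> fls_residue (flip X * (flip f * fls_deriv (flip g))) = - fls_residue (X * (f * fls_deriv g))"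
  using flip_res[of "X * f" g] by (simp add: flip_mult lp_mult mult.assoc)

lemma lp_integral: "lp f \<Longrightarrow> lp (fls_integral f)"
  unfolding lp_def by (metis fls_integral_nth mult_zero_right zless_add1_eq add.commute diff_add_cancel less_diff_eq)

locale glob =
  fixes d1 d2 :: nat and \<gamma> :: complex and \<alpha> \<beta> :: "nat \<Rightarrow> complex"
  assumes gnz: "\<gamma> \<noteq> 0"
begin

sublocale Qs: side \<gamma> \<alpha> \<beta> d2 d1 by unfold_locales (rule gnz)
sublocale Ps: side \<gamma> \<beta> \<alpha> d1 d2 by unfold_locales (rule gnz)

abbreviation "QQ \<equiv> big \<gamma> \<alpha> d2"
abbreviation "PP \<equiv> small \<gamma> \<beta> d1"
abbreviation "PL \<equiv> big \<gamma> \<beta> d1"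
abbreviation "QL \<equiv> small \<gamma> \<alpha> d2"

lemma Pl_flip: "PL = flip PP" by (simp add: flip_small)
lemma Ql_flip: "QL = flip QQ" by (simp add: flip_big)

definition S where "S = fls_integral (PP * fls_deriv QQ - fls_const Qs.tS * fls_X_inv)"
definition SP where "SP = PL * QL - flip S"

lemma tP_eq: "Ps.tS = Qs.tS"
proof -
  have "Ps.tS = fls_residue (flip QQ * fls_deriv (flip PP))"
    unfolding Ps.tS_def fres_def Pl_flip Ql_flip ..
  also have "\<dots> = - fls_residue (QQ * fls_deriv PP)" by (rule flip_res) (simp_all add: lp_big lp_small)
  also have "\<dots> = fls_residue (fls_deriv QQ * PP)" using fls_residue_times_deriv[of QQ PP] by simp
  also have "\<dots> = Qs.tS" unfolding Qs.tS_def fres_def by (simp add: mult.commute)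
  finally show ?thesis .
qed

lemma lpS: "lp S" unfolding S_def
  by (intro lp_integral lp_diff lp_mult lp_deriv lp_big lp_small lp_const lp_X_inv)

lemma S_deriv: "fls_deriv S = PP * fls_deriv QQ - fls_const Qs.tS * fls_X_inv"
  unfolding S_def
proof (rule fls_deriv_fls_integral)
  have "fls_residue (PP * fls_deriv QQ) = Qs.tS" unfolding Qs.tS_def fres_def ..
  then show "fls_residue (PP * fls_deriv QQ - fls_const Qs.tS * fls_X_inv) = 0"
    by (simp only: res_diff res_cmult) simp
qed

lemma S0: "S $$ 0 = 0" unfolding S_def by simp

lemma flipS_deriv: "fls_deriv (flip S) = PL * fls_deriv QL + fls_const Qs.tS * fls_X_inv"
proof -
  have "flip (fls_deriv S) = flip (PP * fls_deriv QQ) - flip (fls_const Qs.tS * fls_X_inv)"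
    unfolding S_deriv by (rule flip_diff) (simp_all add: lp_mult lp_deriv lp_big lp_small lp_const lp_X_inv)
  also have "flip (PP * fls_deriv QQ) = - (fls_X ^ 2 * (PL * fls_deriv QL))"
    unfolding Pl_flip Ql_flip by (rule flip_mult_deriv) (simp_all add: lp_big lp_small)
  also have "flip (fls_const Qs.tS * fls_X_inv) = fls_const Qs.tS * fls_X"
    by (simp add: flip_mult flip_const flip_X_inv lp_const lp_X_inv)
  finally have "flip (fls_deriv S) = - (fls_X ^ 2 * (PL * fls_deriv QL)) - fls_const Qs.tS * fls_X" .
  then have "fls_deriv (flip S) = - (fls_X_inv ^ 2 * (- (fls_X ^ 2 * (PL * fls_deriv QL)) - fls_const Qs.tS * fls_X))"
    unfolding deriv_flip_X[OF lpS] by simp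
  also have "\<dots> = (fls_X_inv ^ 2 * fls_X ^ 2) * (PL * fls_deriv QL) + fls_const Qs.tS * (fls_X_inv ^ 2 * fls_X)"
    by (simp only: ring_distribs minus_minus minus_diff_eq mult_minus_right mult_minus_left diff_minus_eq_add) (simp only: ac_simps)
  finally show ?thesis unfolding Xinv2_X2 Xinv2_X by simp
qed

lemma SP_deriv: "fls_deriv SP = QL * fls_deriv PL - fls_const Ps.tS * fls_X_inv"
  unfolding SP_def tP_eq fls_deriv_sub fls_deriv_mult flipS_deriv by (simp add: algebra_simps)

lemma QzE: "Qz d1 d2 \<gamma> \<alpha> \<beta> = QQ" by (simp add: Qz_def)
lemma PzE: "Pz d1 d2 \<gamma> \<alpha> \<beta> = PP" by (simp add: Pz_def)
lemma PlE: "Pl d1 d2 \<gamma> \<alpha> \<beta> = PL" by (simp add: Pl_def)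
lemma QlE: "Ql d1 d2 \<gamma> \<alpha> \<beta> = QL" by (simp add: Ql_def)

lemma uuE: "uu d1 d2 \<gamma> \<alpha> \<beta> K = Qs.uS K"
  unfolding uu_def Qs.uS_def QzE PzE ..
lemma vvE: "vv d1 d2 \<gamma> \<alpha> \<beta> K = Ps.uS K"
  unfolding vv_def Ps.uS_def PlE QlE ..
lemma UUE: "UU d1 d2 \<gamma> \<alpha> \<beta> K = Qs.US K"
  unfolding UU_def Qs.US_def QzE PzE ..
lemma VVE: "VV d1 d2 \<gamma> \<alpha> \<beta> K = Ps.US K"
  unfolding VV_def Ps.US_def PlE QlE ..
lemma ttE: "tt d1 d2 \<gamma> \<alpha> \<beta> = Qs.tS"
  unfolding tt_def Qs.tS_def QzE PzE ..
lemma Phi1E: "Phi1 d1 d2 \<gamma> \<alpha> \<beta> = Qs.PhiS"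
  unfolding Phi1_def Qs.PhiS_def Qs.phiS_def Qs.w_def QzE UUE ..
lemma Phi2E: "Phi2 d1 d2 \<gamma> \<alpha> \<beta> = Ps.PhiS"
  unfolding Phi2_def Ps.PhiS_def Ps.phiS_def Ps.w_def PlE VVE ..
lemma V1E: "V1 d1 d2 \<gamma> \<alpha> \<beta> x = Qs.VS x"
  unfolding V1_def Qs.VS_def uuE ..
lemma V2E: "V2 d1 d2 \<gamma> \<alpha> \<beta> x = Ps.VS x"
  unfolding V2_def Ps.VS_def vvE ..

lemma PART1g: "twoF d1 d2 lg \<gamma> \<alpha> \<beta> =
          (\<Sum>K\<in>{1..d1+1}. uu d1 d2 \<gamma> \<alpha> \<beta> K * UU d1 d2 \<gamma> \<alpha> \<beta> K)
        + (\<Sum>J\<in>{1..d2+1}. vv d1 d2 \<gamma> \<alpha> \<beta> J * VV d1 d2 \<gamma> \<alpha> \<beta> J)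
        + tail d1 d2 lg \<gamma> \<alpha> \<beta>"
  unfolding twoF_def uuE vvE UUE VVE Phi1E Phi2E QzE PzE PlE QlE Qs.PART1 Ps.PART1 ..

lemma fres_X: "fres (F * fls_X) fls_X_inv = - F $$ 0"
proof -
  have "F * fls_X * fls_deriv fls_X_inv = - (F * (fls_X_inv ^ 2 * fls_X))" by (simp add: algebra_simps)
  then show ?thesis unfolding fres_def Xinv2_X by (simp add: fls_X_inv_times_conv_shift)
qed

lemma flip_VS: "flip (Ps.VS PL) = Ps.VS PP"
proof -
  have fP: "flip PL = PP" unfolding Pl_flip by (rule flip_flip[OF lp_small])
  have "flip (Ps.VS PL) = (\<Sum>K\<in>{1..d2+1}. flip (fls_const (Ps.uS K / of_nat K) * PL ^ K))"
    unfolding Ps.VS_def by (rule flip_sum) (auto intro: lp_mult lp_const lp_power lp_big)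
  also have "\<dots> = Ps.VS PP" unfolding Ps.VS_def
    by (intro sum.cong refl) (simp add: flip_mult flip_power flip_const lp_const lp_power lp_big fP)
  finally show ?thesis .
qed

lemma lp_VS: "lp (Ps.VS PL)"
  unfolding Ps.VS_def by (intro lp_sum lp_mult lp_const lp_power lp_big)

lemma c1_eq: "Qs.VS QQ $$ 0 = fls_residue (S * (fls_deriv QQ * inverse QQ))"
  using Qs.C1[OF S_deriv] Qs.GS_nth0 S0 by simp

lemma c2_eq: "Ps.VS PP $$ 0 = (PP * QQ) $$ 0 + fls_residue (SP * (fls_deriv PL * inverse PL))"
proof -
  have "Ps.VS PP $$ 0 = Ps.VS PL $$ 0" unfolding flip_VS[symmetric] by (rule flip_nth0[OF lp_VS])
  also have "\<dots> = Ps.GS $$ 0" using Ps.GS_nth0 by simp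
  also have "\<dots> = SP $$ 0 + fls_residue (SP * (fls_deriv PL * inverse PL))" using Ps.C1[OF SP_deriv]
    by (metis diff_eq_eq add.commute)
  also have "SP $$ 0 = (PP * QQ) $$ 0"
  proof -
    have "(PL * QL) $$ 0 = (PP * QQ) $$ 0" unfolding Pl_flip Ql_flip
      using flip_nth0[of "PP * QQ"] by (simp add: flip_mult lp_big lp_small lp_mult)
    then show ?thesis unfolding SP_def using flip_nth0[OF lpS] S0 by simp
  qed
  finally show ?thesis .
qed

lemma R_eq: "fres ((V1 d1 d2 \<gamma> \<alpha> \<beta> QQ + V2 d1 d2 \<gamma> \<alpha> \<beta> PP - PP * QQ) * fls_X) fls_X_inv =
   - (fls_residue (S * (fls_deriv QQ * inverse QQ)) + fls_residue (SP * (fls_deriv PL * inverse PL)))"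
  unfolding fres_X V1E V2E using c1_eq c2_eq by simp

end

lemma VAR_arith:
  fixes a1 a2 b1 b2 rG rGP rS rSP rW rWP W0 WP0 t g c1d c2d rPQ :: complex
  assumes "- rG = a1 - a2" "- rGP = b1 - b2" "- rG = - rS + t * rW + t * W0" "- rGP = - rSP + t * rWP + t * WP0"
    "c1d = rW + t * g" "c2d = rWP + t * g" "rSP = rPQ - rS" "WP0 = - W0"
  shows "a1 + b1 + rPQ - t * (c1d + c2d) + 2 * t ^ 2 * g = a2 + b2"
proof -
  have "a1 - a2 + (b1 - b2) = - rPQ + t * rW + t * rWP" using assms by (simp add: algebra_simps)
  then show ?thesis using assms by (simp add: algebra_simps power2_eq_square)
qed

context glob
begin

definition "dQQ dg da = big dg da d2"
definition "dPP dg db = small dg db d1"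
definition "dPL dg db = big dg db d1"
definition "dQL dg da = small dg da d2"

lemma dPL_flip: "dPL dg db = flip (dPP dg db)" unfolding dPL_def dPP_def by (simp add: flip_small)
lemma dQL_flip: "dQL dg da = flip (dQQ dg da)" unfolding dQL_def dQQ_def by (simp add: flip_big)

lemma dSP_deriv:
  assumes lpd: "lp dS"
    and dS': "fls_deriv dS = dPP dg db * fls_deriv QQ + PP * fls_deriv (dQQ dg da) - fls_const dt * fls_X_inv"
  shows "fls_deriv (dPL dg db * QL + PL * dQL dg da - flip dS) =
     dQL dg da * fls_deriv PL + QL * fls_deriv (dPL dg db) - fls_const dt * fls_X_inv"
proof -
  have lps: "lp (dPP dg db)" "lp (dQQ dg da)" unfolding dPP_def dQQ_def by (simp_all add: lp_big lp_small)
  have "flip (fls_deriv dS) = flip (dPP dg db * fls_deriv QQ) + flip (PP * fls_deriv (dQQ dg da)) - flip (fls_const dt * fls_X_inv)"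
    unfolding dS' using lps
    by (simp add: flip_add flip_diff lp_add lp_mult lp_deriv lp_big lp_small lp_const lp_X_inv)
  also have "flip (dPP dg db * fls_deriv QQ) = - (fls_X ^ 2 * (dPL dg db * fls_deriv QL))"
    unfolding dPL_flip Ql_flip by (rule flip_mult_deriv) (simp_all add: lps lp_big)
  also have "flip (PP * fls_deriv (dQQ dg da)) = - (fls_X ^ 2 * (PL * fls_deriv (dQL dg da)))"
    unfolding Pl_flip dQL_flip by (rule flip_mult_deriv) (simp_all add: lps lp_small)
  also have "flip (fls_const dt * fls_X_inv) = fls_const dt * fls_X"
    by (simp add: flip_mult flip_const flip_X_inv lp_const lp_X_inv)
  finally have fd: "flip (fls_deriv dS) = - (fls_X ^ 2 * (dPL dg db * fls_deriv QL)) + - (fls_X ^ 2 * (PL * fls_deriv (dQL dg da))) - fls_const dt * fls_X" .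
  have "fls_deriv (flip dS) = - (fls_X_inv ^ 2 * flip (fls_deriv dS))" by (rule deriv_flip_X[OF lpd])
  also have "\<dots> = (fls_X_inv ^ 2 * fls_X ^ 2) * (dPL dg db * fls_deriv QL) + (fls_X_inv ^ 2 * fls_X ^ 2) * (PL * fls_deriv (dQL dg da))
      + fls_const dt * (fls_X_inv ^ 2 * fls_X)"
    unfolding fd by (simp add: algebra_simps)
  finally have "fls_deriv (flip dS) = dPL dg db * fls_deriv QL + PL * fls_deriv (dQL dg da) + fls_const dt * fls_X_inv"
    unfolding Xinv2_X2 Xinv2_X by simp
  then show ?thesis by (simp add: algebra_simps)
qed

lemma res_flip_Om:
  assumes "lp X"
  shows "fls_residue (flip X * (dQL dg da * fls_deriv PL - dPL dg db * fls_deriv QL)) =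
         fls_residue (X * (dPP dg db * fls_deriv QQ - dQQ dg da * fls_deriv PP))"
proof -
  have lps: "lp (dPP dg db)" "lp (dQQ dg da)" unfolding dPP_def dQQ_def by (simp_all add: lp_big lp_small)
  have "fls_residue (flip X * (dQL dg da * fls_deriv PL)) = - fls_residue (X * (dQQ dg da * fls_deriv PP))"
    unfolding dQL_flip Pl_flip by (rule flip_res_gen) (simp_all add: assms lps lp_small)
  moreover have "fls_residue (flip X * (dPL dg db * fls_deriv QL)) = - fls_residue (X * (dPP dg db * fls_deriv QQ))"
    unfolding dPL_flip Ql_flip by (rule flip_res_gen) (simp_all add: assms lps lp_big)
  ultimately show ?thesis by (simp only: right_diff_distrib res_diff) simp
qed

lemma VAR:
  assumes lpd: "lp dS"
    and dS': "fls_deriv dS = dPP dg db * fls_deriv QQ + PP * fls_deriv (dQQ dg da) - fls_const 0 * fls_X_inv"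
  defines "\<Omega> \<equiv> dPP dg db * fls_deriv QQ - dQQ dg da * fls_deriv PP"
    and "\<Omega>P \<equiv> dQL dg da * fls_deriv PL - dPL dg db * fls_deriv QL"
    and "dSP \<equiv> dPL dg db * QL + PL * dQL dg da - flip dS"
  shows "(\<Sum>K\<in>{1..d1+1}. Qs.uS K * (- fls_residue (QQ ^ K * \<Omega>) / of_nat K))
       + (\<Sum>J\<in>{1..d2+1}. Ps.uS J * (- fls_residue (PL ^ J * \<Omega>P) / of_nat J))
       + fls_residue (PP * QQ * \<Omega>)
       - Qs.tS * (fls_residue (dS * (fls_deriv QQ * inverse QQ) + S * (fls_deriv (dQQ dg da) * inverse QQ + fls_deriv QQ * (- dQQ dg da * inverse QQ ^ 2)))
                + fls_residue (dSP * (fls_deriv PL * inverse PL) + SP * (fls_deriv (dPL dg db) * inverse PL + fls_deriv PL * (- dPL dg db * inverse PL ^ 2))))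
       + 2 * Qs.tS ^ 2 * (dg / \<gamma>)
     = (\<Sum>K\<in>{1..d1+1}. Qs.US K * (- fls_residue (QQ powi (- int K) * \<Omega>)))
       + (\<Sum>J\<in>{1..d2+1}. Ps.US J * (- fls_residue (PL powi (- int J) * \<Omega>P)))"
proof -
  define W where "W = dS - PP * dQQ dg da"
  define WP where "WP = dSP - QL * dPL dg db"
  have dSP': "fls_deriv dSP = dQL dg da * fls_deriv PL + QL * fls_deriv (dPL dg db) - fls_const 0 * fls_X_inv"
    unfolding dSP_def by (rule dSP_deriv[OF lpd dS'])
  have gq: "- fls_residue (Qs.GS * \<Omega>) = (\<Sum>K\<in>{1..d1+1}. Qs.uS K * (- fls_residue (QQ ^ K * \<Omega>) / of_nat K))
     - (\<Sum>K\<in>{1..d1+1}. Qs.US K * (- fls_residue (QQ powi (- int K) * \<Omega>)))"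
    unfolding \<Omega>_def dPP_def dQQ_def by (rule Qs.GS_pair[OF Qs.lowb_Om])
  have gp: "- fls_residue (Ps.GS * \<Omega>P) = (\<Sum>K\<in>{1..d2+1}. Ps.uS K * (- fls_residue (PL ^ K * \<Omega>P) / of_nat K))
     - (\<Sum>K\<in>{1..d2+1}. Ps.US K * (- fls_residue (PL powi (- int K) * \<Omega>P)))"
    unfolding \<Omega>P_def dPL_def dQL_def by (rule Ps.GS_pair[OF Ps.lowb_Om])
  have s2q: "- fls_residue (Qs.GS * \<Omega>) = - fls_residue (S * \<Omega>) + Qs.tS * fls_residue (W * (fls_deriv QQ * inverse QQ)) + Qs.tS * W $$ 0"
    using Qs.SIG2[OF S_deriv dS'] unfolding \<Omega>_def W_def by simp
  have s2p: "- fls_residue (Ps.GS * \<Omega>P) = - fls_residue (SP * \<Omega>P) + Qs.tS * fls_residue (WP * (fls_deriv PL * inverse PL)) + Qs.tS * WP $$ 0"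
    using Ps.SIG2[OF SP_deriv dSP'] unfolding \<Omega>P_def WP_def tP_eq by simp
  have s3q: "fls_residue (dS * (fls_deriv QQ * inverse QQ) + S * (fls_deriv (dQQ dg da) * inverse QQ + fls_deriv QQ * (- dQQ dg da * inverse QQ ^ 2)))
      = fls_residue (W * (fls_deriv QQ * inverse QQ)) + Qs.tS * (dg / \<gamma>)"
    using Qs.SIG3[OF S_deriv, of dS "dQQ dg da"] Qs.dA_iA0 unfolding W_def dQQ_def by simp
  have s3p: "fls_residue (dSP * (fls_deriv PL * inverse PL) + SP * (fls_deriv (dPL dg db) * inverse PL + fls_deriv PL * (- dPL dg db * inverse PL ^ 2)))
      = fls_residue (WP * (fls_deriv PL * inverse PL)) + Qs.tS * (dg / \<gamma>)"
    using Ps.SIG3[OF SP_deriv, of dSP "dPL dg db"] Ps.dA_iA0 unfolding WP_def dPL_def tP_eq by simp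
  have gl1: "fls_residue (SP * \<Omega>P) = fls_residue (PP * QQ * \<Omega>) - fls_residue (S * \<Omega>)"
  proof -
    have "SP = flip (PP * QQ - S)" unfolding SP_def Pl_flip Ql_flip
      by (simp add: flip_diff flip_mult lp_mult lp_small lp_big lpS)
    then have "fls_residue (SP * \<Omega>P) = fls_residue ((PP * QQ - S) * \<Omega>)"
      unfolding \<Omega>P_def \<Omega>_def by (simp only: res_flip_Om lp_diff lp_mult lp_small lp_big lpS)
    then show ?thesis by (simp only: left_diff_distrib res_diff)
  qed
  have gl2: "WP $$ 0 = - (W $$ 0)"
  proof -
    have l1: "lp (dQQ dg da)" unfolding dQQ_def by (rule lp_big)
    have "WP = PL * dQL dg da - flip dS" unfolding WP_def dSP_def by (simp add: algebra_simps)
    also have "PL * dQL dg da = flip (PP * dQQ dg da)" unfolding Pl_flip dQL_flip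
      by (rule flip_mult[symmetric]) (simp_all add: lp_small l1)
    also have "flip (PP * dQQ dg da) - flip dS = flip (PP * dQQ dg da - dS)"
      by (rule flip_diff[symmetric]) (simp_all add: lp_mult lp_small l1 lpd)
    finally have "WP = flip (PP * dQQ dg da - dS)" .
    then show ?thesis unfolding W_def
      by (simp add: flip_nth0 lp_diff lp_mult lp_small lp_big lpd dQQ_def)
  qed
  show ?thesis by (rule VAR_arith[OF gq gp s2q s2p s3q s3p gl1 gl2])
qed

end

definition highb :: "complex fls \<Rightarrow> int \<Rightarrow> bool" where "highb f M \<longleftrightarrow> (\<forall>n>M. f $$ n = 0)"

lemma highb_lp: "highb f M \<Longrightarrow> lp f" unfolding highb_def lp_def by blast

lemma highb_mono: "highb f M \<Longrightarrow> M \<le> M' \<Longrightarrow> highb f M'" unfolding highb_def by auto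

lemma highb_add: "highb f M \<Longrightarrow> highb g M \<Longrightarrow> highb (f + g) M" unfolding highb_def by auto
lemma highb_diff: "highb f M \<Longrightarrow> highb g M \<Longrightarrow> highb (f - g) M" unfolding highb_def by auto

lemma highb_mult: "highb f M1 \<Longrightarrow> highb g M2 \<Longrightarrow> highb (f * g) (M1 + M2)"
proof -
  assume a: "highb f M1" "highb g M2"
  obtain L1 where l1: "\<forall>n<L1. f $$ n = 0" by (elim fls_nth_vanishes_belowE)
  obtain L2 where l2: "\<forall>n<L2. g $$ n = 0" by (elim fls_nth_vanishes_belowE)
  show ?thesis unfolding highb_def
  proof safe
    fix n assume "n > M1 + M2"
    then show "(f*g) $$ n = 0" unfolding fls_times_nth_support[OF l1 a(1)[unfolded highb_def] l2] using a(2)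
      unfolding highb_def by (intro sum.neutral) auto
  qed
qed

lemma highb_deriv: "highb f M \<Longrightarrow> highb (fls_deriv f) (M - 1)" unfolding highb_def by simp
lemma highb_integral: "highb f M \<Longrightarrow> highb (fls_integral f) (M + 1)" unfolding highb_def by simp
lemma highb_const: "highb (fls_const c) 0" unfolding highb_def by simp
lemma highb_X_inv: "highb fls_X_inv (-1)" unfolding highb_def by simp
lemma highb_big: "highb (big g a d) (int d)" unfolding highb_def by (simp add: big_nth)
lemma highb_small: "highb (small g a d) 1" unfolding highb_def by (simp add: small_nth)

lemma fd_highE:
  assumes "fd f f'" "eventually (\<lambda>s. highb (f s) M) (nhds 0)"
  shows "highb f' M"
  unfolding highb_def
proof safe
  fix n assume n: "n > M"
  have d: "((\<lambda>s. f s $$ n) has_field_derivative f' $$ n) (at 0)" using assms fd_nthD by blast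
  have "eventually (\<lambda>s. f s $$ n = 0) (nhds 0)" using assms(2) by (rule eventually_mono) (use n in \<open>auto simp: highb_def\<close>)
  then have "((\<lambda>s. f s $$ n) has_field_derivative 0) (at 0)"
    using DERIV_cong_ev[of 0 0 "\<lambda>s. f s $$ n" "\<lambda>s. 0" 0 0] by simp
  then show "f' $$ n = 0" using d DERIV_unique by blast
qed

lemma fd_flip:
  assumes fdf: "fd f f'" and ev: "eventually (\<lambda>s. highb (f s) M) (nhds 0)"
  shows "fd (\<lambda>s. flip (f s)) (flip f')"
proof -
  have hf': "highb f' M" by (rule fd_highE[OF fdf ev])
  have "eventually (\<lambda>s. \<forall>n< -M. flip (f s) $$ n = 0) (nhds 0)"
    using ev by (rule eventually_mono) (auto simp: highb_def flip_nth highb_lp)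
  moreover have "((\<lambda>s. flip (f s) $$ n) has_field_derivative flip f' $$ n) (at 0)" for n
  proof -
    have "eventually (\<lambda>s. flip (f s) $$ n = f s $$ (-n)) (nhds 0)"
      using ev by (rule eventually_mono) (auto simp: flip_nth highb_lp)
    moreover have "((\<lambda>s. f s $$ (-n)) has_field_derivative flip f' $$ n) (at 0)"
      using fd_nthD[OF fdf, of "-n"] by (simp add: flip_nth highb_lp[OF hf'])
    ultimately show ?thesis using DERIV_cong_ev[of 0 0 "\<lambda>s. flip (f s) $$ n" "\<lambda>s. f s $$ (-n)"] by simp
  qed
  ultimately show ?thesis unfolding fd_def by blast
qed

lemma fd_integral: "fd f f' \<Longrightarrow> fd (\<lambda>s. fls_integral (f s)) (fls_integral f')"
proof -
  assume a: "fd f f'"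
  from a obtain N where e: "eventually (\<lambda>s. \<forall>n<N. f s $$ n = 0) (nhds 0)" unfolding fd_def by blast
  have "eventually (\<lambda>s. \<forall>n<min N 0. fls_integral (f s) $$ n = 0) (nhds 0)"
    using e by (rule eventually_mono) auto
  moreover have "((\<lambda>s. fls_integral (f s) $$ n) has_field_derivative fls_integral f' $$ n) (at 0)" for n
    using DERIV_cmult[OF fd_nthD[OF a, of "n-1"], of "inverse (of_int n)"] by simp
  ultimately show ?thesis unfolding fd_def by blast
qed

lemma fd_big:
  assumes "(g has_field_derivative dg) (at 0)" "\<forall>j\<le>d. ((\<lambda>s. a s j) has_field_derivative da j) (at 0)"
  shows "fd (\<lambda>s. big (g s) (a s) d) (big dg da d)"
  unfolding fd_def
proof (intro conjI exI allI)
  show "eventually (\<lambda>s. \<forall>n< -1. big (g s) (a s) d $$ n = 0) (nhds 0)" by (simp add: big_nth)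
  fix n
  show "((\<lambda>s. big (g s) (a s) d $$ n) has_field_derivative big dg da d $$ n) (at 0)"
    unfolding big_nth using assms by (cases "n = -1"; cases "0 \<le> n \<and> n \<le> int d") auto
qed

lemma fd_small:
  assumes "(g has_field_derivative dg) (at 0)" "\<forall>j\<le>e. ((\<lambda>s. b s j) has_field_derivative db j) (at 0)"
  shows "fd (\<lambda>s. small (g s) (b s) e) (small dg db e)"
  unfolding fd_def
proof (intro conjI exI allI)
  show "eventually (\<lambda>s. \<forall>n< - int e. small (g s) (b s) e $$ n = 0) (nhds 0)" by (simp add: small_nth)
  fix n
  show "((\<lambda>s. small (g s) (b s) e $$ n) has_field_derivative small dg db e $$ n) (at 0)"
    unfolding small_nth using assms by (cases "n = 1"; cases "- int e \<le> n \<and> n \<le> 0") auto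
qed

lemma fd_inverse_big:
  assumes "(g has_field_derivative dg) (at 0)" "\<forall>j\<le>d. ((\<lambda>s. a s j) has_field_derivative da j) (at 0)" "g 0 \<noteq> 0"
  shows "fd (\<lambda>s. inverse (big (g s) (a s) d)) (- big dg da d * inverse (big (g 0) (a 0) d) ^ 2)"
  using fd_inverse[OF fd_big[OF assms(1,2)], of "-1"] assms(3) by (simp add: big_nth)

lemma fd_res_form:
  assumes fA: "fd A dA" and fB: "fd B dB" and fP: "fd P dP"
    and compat: "dP * fls_deriv (A 0) = fls_deriv (P 0) * dA"
  shows "((\<lambda>s. fls_residue (B s * P s * fls_deriv (A s))) has_field_derivative
     fls_residue (P 0 * (dB * fls_deriv (A 0) - dA * fls_deriv (B 0)))) (at 0)"
proof -
  have "fd (\<lambda>s. B s * P s * fls_deriv (A s)) ((dB * P 0 + B 0 * dP) * fls_deriv (A 0) + (B 0 * P 0) * fls_deriv dA)"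
    using fd_mult[OF fd_mult[OF fB fP] fd_deriv[OF fA]] by simp
  moreover have "fls_residue ((dB * P 0 + B 0 * dP) * fls_deriv (A 0) + (B 0 * P 0) * fls_deriv dA) =
      fls_residue (P 0 * (dB * fls_deriv (A 0) - dA * fls_deriv (B 0)))"
  proof -
    have "(dB * P 0 + B 0 * dP) * fls_deriv (A 0) + (B 0 * P 0) * fls_deriv dA =
        dB * P 0 * fls_deriv (A 0) + B 0 * dP * fls_deriv (A 0) + B 0 * P 0 * fls_deriv dA"
      by (simp add: algebra_simps)
    then show ?thesis using IBP1[OF compat, of dB "B 0"] by simp
  qed
  ultimately show ?thesis using fd_residue by fastforce
qed

lemma lg_deriv:
  assumes "open S" "z \<in> S" "lg holomorphic_on S" "\<forall>x\<in>S. exp (lg x) = x"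
  shows "(lg has_field_derivative inverse z) (at z)"
proof -
  have "lg field_differentiable (at z)" using assms holomorphic_on_imp_differentiable_at by blast
  then have L: "(lg has_field_derivative deriv lg z) (at z)" using DERIV_deriv_iff_field_differentiable by blast
  have "((\<lambda>x. exp (lg x)) has_field_derivative exp (lg z) * deriv lg z) (at z)"
    using DERIV_chain'[OF L DERIV_exp] by (simp add: mult.commute)
  moreover have "eventually (\<lambda>x. exp (lg x) = x) (nhds z)"
    using assms(1,2,4) eventually_nhds by blast
  ultimately have "((\<lambda>x. x) has_field_derivative exp (lg z) * deriv lg z) (at z)"
    using DERIV_cong_ev[of z z "\<lambda>x. exp (lg x)" "\<lambda>x. x"] by simp
  then have "exp (lg z) * deriv lg z = 1" using DERIV_ident DERIV_unique by blast
  then have "z * deriv lg z = 1" using assms(2,4) by simp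
  then have "deriv lg z = inverse z" by (metis inverse_unique mult.commute)
  then show ?thesis using L by simp
qed

locale curve =
  fixes d1 d2 :: nat and c :: "complex \<Rightarrow> nat \<Rightarrow> complex" and c' :: "nat \<Rightarrow> complex"
  assumes cd: "\<And>j. j < d1 + d2 + 3 \<Longrightarrow> ((\<lambda>s. c s j) has_field_derivative c' j) (at 0)"
    and g0: "c 0 0 \<noteq> 0"
begin

definition "gam s = pg (c s)"
definition "al s = pa (c s)"
definition "be s = pb d2 (c s)"
definition "dg = c' 0"
definition "da j = c' (Suc j)"
definition "db j = c' (d2 + 2 + j)"

lemma D_gam: "(gam has_field_derivative dg) (at 0)"
  unfolding gam_def pg_def dg_def using cd[of 0] by simp
lemma D_al: "\<forall>j\<le>d2. ((\<lambda>s. al s j) has_field_derivative da j) (at 0)"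
  unfolding al_def pa_def da_def using cd by simp
lemma D_be: "\<forall>j\<le>d1. ((\<lambda>s. be s j) has_field_derivative db j) (at 0)"
  unfolding be_def pb_def db_def using cd by simp
lemma gam0: "gam 0 \<noteq> 0" unfolding gam_def pg_def using g0 .

lemma ev_gam: "eventually (\<lambda>s. gam s \<noteq> 0) (nhds 0)"
  by (rule ev_nonzero[OF D_gam gam0])

definition "QQf s = big (gam s) (al s) d2"
definition "PPf s = small (gam s) (be s) d1"
definition "PLf s = big (gam s) (be s) d1"
definition "QLf s = small (gam s) (al s) d2"
definition "dQ = big dg da d2"
definition "dP = small dg db d1"
definition "dPL = big dg db d1"
definition "dQL = small dg da d2"

lemma fdQQ: "fd QQf dQ" unfolding QQf_def dQ_def by (rule fd_big[OF D_gam D_al])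
lemma fdPP: "fd PPf dP" unfolding PPf_def dP_def by (rule fd_small[OF D_gam D_be])
lemma fdPL: "fd PLf dPL" unfolding PLf_def dPL_def by (rule fd_big[OF D_gam D_be])
lemma fdQL: "fd QLf dQL" unfolding QLf_def dQL_def by (rule fd_small[OF D_gam D_al])
lemma fdiQQ: "fd (\<lambda>s. inverse (QQf s)) (- dQ * inverse (QQf 0) ^ 2)"
  unfolding QQf_def dQ_def by (rule fd_inverse_big[OF D_gam D_al gam0])
lemma fdiPL: "fd (\<lambda>s. inverse (PLf s)) (- dPL * inverse (PLf 0) ^ 2)"
  unfolding PLf_def dPL_def by (rule fd_inverse_big[OF D_gam D_be gam0])

definition "Om = dP * fls_deriv (QQf 0) - dQ * fls_deriv (PPf 0)"
definition "OmP = dQL * fls_deriv (PLf 0) - dPL * fls_deriv (QLf 0)"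

lemma compat_inv_pow:
  "(of_nat K * inverse A ^ (K - 1) * (- dA * inverse A ^ 2)) * fls_deriv A = fls_deriv (inverse A ^ K) * (dA :: complex fls)"
  by (simp add: fls_deriv_power fls_inverse_deriv algebra_simps)

lemma compat_pow:
  "(of_nat K * A ^ (K - 1) * dA) * fls_deriv A = fls_deriv (A ^ K) * (dA :: complex fls)"
  by (simp add: fls_deriv_power algebra_simps)

lemma uu_form: "uu d1 d2 (gam s) (al s) (be s) K = - fls_residue (PPf s * inverse (QQf s) ^ K * fls_deriv (QQf s))"
  unfolding uu_def fres_def Qz_def Pz_def PPf_def QQf_def by (simp add: mult.assoc)

lemma vv_form: "vv d1 d2 (gam s) (al s) (be s) K = - fls_residue (QLf s * inverse (PLf s) ^ K * fls_deriv (PLf s))"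
  unfolding vv_def fres_def Ql_def Pl_def QLf_def PLf_def by (simp add: mult.assoc)

lemma tt_form: "tt d1 d2 (gam s) (al s) (be s) = fls_residue (PPf s * 1 * fls_deriv (QQf s))"
  unfolding tt_def fres_def Qz_def Pz_def PPf_def QQf_def by simp

lemma D_uu: "((\<lambda>s. uu d1 d2 (gam s) (al s) (be s) K) has_field_derivative
    - fls_residue (QQf 0 powi (- int K) * Om)) (at 0)"
proof -
  have "((\<lambda>s. fls_residue (PPf s * inverse (QQf s) ^ K * fls_deriv (QQf s))) has_field_derivative
      fls_residue (inverse (QQf 0) ^ K * Om)) (at 0)"
    unfolding Om_def by (rule fd_res_form[OF fdQQ fdPP fd_power[OF fdiQQ] compat_inv_pow])
  then show ?thesis unfolding uu_form
    by (simp add: power_int_minus power_inverse del: fls_residue_def) (rule DERIV_minus)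
qed

lemma D_vv: "((\<lambda>s. vv d1 d2 (gam s) (al s) (be s) K) has_field_derivative
    - fls_residue (PLf 0 powi (- int K) * OmP)) (at 0)"
proof -
  have "((\<lambda>s. fls_residue (QLf s * inverse (PLf s) ^ K * fls_deriv (PLf s))) has_field_derivative
      fls_residue (inverse (PLf 0) ^ K * OmP)) (at 0)"
    unfolding OmP_def by (rule fd_res_form[OF fdPL fdQL fd_power[OF fdiPL] compat_inv_pow])
  then show ?thesis unfolding vv_form
    by (simp add: power_int_minus power_inverse del: fls_residue_def) (rule DERIV_minus)
qed

lemma D_t: "((\<lambda>s. tt d1 d2 (gam s) (al s) (be s)) has_field_derivative fls_residue Om) (at 0)"
proof -
  have "((\<lambda>s. fls_residue (PPf s * (\<lambda>s. 1) s * fls_deriv (QQf s))) has_field_derivative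
      fls_residue ((\<lambda>s. 1) 0 * Om)) (at 0)"
    unfolding Om_def by (rule fd_res_form[OF fdQQ fdPP fd_const]) simp
  then show ?thesis unfolding tt_form by simp
qed

definition "UUr K s = - fls_residue (PPf s * QQf s ^ K * fls_deriv (QQf s)) / of_nat K"
definition "VVr K s = - fls_residue (QLf s * PLf s ^ K * fls_deriv (PLf s)) / of_nat K"

lemma D_UUr: "((\<lambda>s. UUr K s) has_field_derivative - fls_residue (QQf 0 ^ K * Om) / of_nat K) (at 0)"
proof -
  have "((\<lambda>s. fls_residue (PPf s * QQf s ^ K * fls_deriv (QQf s))) has_field_derivative
      fls_residue (QQf 0 ^ K * Om)) (at 0)"
    unfolding Om_def by (rule fd_res_form[OF fdQQ fdPP fd_power[OF fdQQ] compat_pow])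
  from DERIV_cdivide[OF DERIV_minus[OF this], of "of_nat K"] show ?thesis unfolding UUr_def by simp
qed

lemma D_VVr: "((\<lambda>s. VVr K s) has_field_derivative - fls_residue (PLf 0 ^ K * OmP) / of_nat K) (at 0)"
proof -
  have "((\<lambda>s. fls_residue (QLf s * PLf s ^ K * fls_deriv (PLf s))) has_field_derivative
      fls_residue (PLf 0 ^ K * OmP)) (at 0)"
    unfolding OmP_def by (rule fd_res_form[OF fdPL fdQL fd_power[OF fdPL] compat_pow])
  from DERIV_cdivide[OF DERIV_minus[OF this], of "of_nat K"] show ?thesis unfolding VVr_def by simp
qed

definition "half s = fls_residue (PPf s ^ 2 * QQf s * fls_deriv (QQf s)) / 2"

lemma D_half: "((\<lambda>s. half s) has_field_derivative fls_residue (PPf 0 * QQf 0 * Om)) (at 0)"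
proof -
  have f: "fd (\<lambda>s. PPf s * PPf s * QQf s * fls_deriv (QQf s))
     (((dP * PPf 0 + PPf 0 * dP) * QQf 0 + (PPf 0 * PPf 0) * dQ) * fls_deriv (QQf 0) + (PPf 0 * PPf 0 * QQf 0) * fls_deriv dQ)"
    using fd_mult[OF fd_mult[OF fd_mult[OF fdPP fdPP] fdQQ] fd_deriv[OF fdQQ]] by simp
  have e: "((dP * PPf 0 + PPf 0 * dP) * QQf 0 + (PPf 0 * PPf 0) * dQ) * fls_deriv (QQf 0) + (PPf 0 * PPf 0 * QQf 0) * fls_deriv dQ
      = dP * PPf 0 * QQf 0 * fls_deriv (QQf 0) + PPf 0 * dP * QQf 0 * fls_deriv (QQf 0) + PPf 0 * PPf 0 * dQ * fls_deriv (QQf 0) + PPf 0 * PPf 0 * QQf 0 * fls_deriv dQ"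
    by (simp add: algebra_simps)
  have "((\<lambda>s. fls_residue (PPf s * PPf s * QQf s * fls_deriv (QQf s))) has_field_derivative
      2 * fls_residue (PPf 0 * QQf 0 * Om)) (at 0)"
    using fd_residue[OF f] unfolding e IBP2 Om_def .
  from DERIV_cdivide[OF this, of 2] show ?thesis unfolding half_def by (simp add: power2_eq_square)
qed

definition "ttf s = tt d1 d2 (gam s) (al s) (be s)"
definition "Sf s = fls_integral (PPf s * fls_deriv (QQf s) - fls_const (ttf s) * fls_X_inv)"
definition "dSf = fls_integral (dP * fls_deriv (QQf 0) + PPf 0 * fls_deriv dQ - fls_const (fls_residue Om) * fls_X_inv)"

lemma fdS: "fd Sf dSf"
proof -
  have "fd (\<lambda>s. fls_const (ttf s) * fls_X_inv) (fls_const (fls_residue Om) * fls_X_inv + fls_const (ttf 0) * 0)"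
    using fd_mult[OF fd_fls_const[OF D_t[folded ttf_def]] fd_const[of fls_X_inv]] by simp
  from fd_integral[OF fd_diff[OF fd_mult[OF fdPP fd_deriv[OF fdQQ]] this]]
  show ?thesis unfolding Sf_def dSf_def by simp
qed

lemma highb_Sf: "highb (Sf s) (int d2 + 1)"
proof -
  have "highb (PPf s * fls_deriv (QQf s)) (1 + (int d2 - 1))"
    unfolding PPf_def QQf_def by (intro highb_mult highb_deriv highb_small highb_big)
  moreover have "highb (fls_const (ttf s) * fls_X_inv) (0 + -1)"
    by (intro highb_mult highb_const highb_X_inv)
  ultimately have "highb (PPf s * fls_deriv (QQf s) - fls_const (ttf s) * fls_X_inv) (int d2)"
    by (intro highb_diff) (auto elim: highb_mono)
  then show ?thesis unfolding Sf_def by (rule highb_integral)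
qed

definition "SPf s = PLf s * QLf s - flip (Sf s)"
definition "dSPf = dPL * QLf 0 + PLf 0 * dQL - flip dSf"

lemma fdSP: "fd SPf dSPf"
  unfolding SPf_def dSPf_def
  using fd_diff[OF fd_mult[OF fdPL fdQL] fd_flip[OF fdS, of "int d2 + 1"]] highb_Sf by simp

definition "c1f s = fls_residue (Sf s * (fls_deriv (QQf s) * inverse (QQf s)))"
definition "c2f s = fls_residue (SPf s * (fls_deriv (PLf s) * inverse (PLf s)))"

lemma D_c1: "(c1f has_field_derivative fls_residue (dSf * (fls_deriv (QQf 0) * inverse (QQf 0)) +
    Sf 0 * (fls_deriv dQ * inverse (QQf 0) + fls_deriv (QQf 0) * (- dQ * inverse (QQf 0) ^ 2)))) (at 0)"
  unfolding c1f_def using fd_residue[OF fd_mult[OF fdS fd_mult[OF fd_deriv[OF fdQQ] fdiQQ]]] by simp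

lemma D_c2: "(c2f has_field_derivative fls_residue (dSPf * (fls_deriv (PLf 0) * inverse (PLf 0)) +
    SPf 0 * (fls_deriv dPL * inverse (PLf 0) + fls_deriv (PLf 0) * (- dPL * inverse (PLf 0) ^ 2)))) (at 0)"
  unfolding c2f_def using fd_residue[OF fd_mult[OF fdSP fd_mult[OF fd_deriv[OF fdPL] fdiPL]]] by simp

end

lemma DERIV_mult2:
  "(f has_field_derivative Da) (at x) \<Longrightarrow> (g has_field_derivative Db) (at x) \<Longrightarrow>
    ((\<lambda>x. f x * g x) has_field_derivative Da * g x + f x * Db) (at x)"
  using DERIV_mult[of f Da x UNIV g Db] by (simp add: mult.commute)

context curve
begin

definition "Ef lg s = ((\<Sum>K\<in>{1..d1+1}. uu d1 d2 (gam s) (al s) (be s) K * UUr K s)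
   + (\<Sum>J\<in>{1..d2+1}. vv d1 d2 (gam s) (al s) (be s) J * VVr J s)
   + half s + ttf s * (- (c1f s + c2f s)) + 2 * ttf s ^ 2 * lg (gam s)) / 2"

lemma EQ_at:
  assumes "gam s \<noteq> 0"
  shows "FF d1 d2 lg (gam s) (al s) (be s) = Ef lg s"
proof -
  interpret G: glob d1 d2 "gam s" "al s" "be s" by unfold_locales (rule assms)
  have U: "UU d1 d2 (gam s) (al s) (be s) K = UUr K s" for K
    unfolding G.UUE G.Qs.US_formula UUr_def fres_def PPf_def QQf_def by (simp add: mult.assoc)
  have V: "VV d1 d2 (gam s) (al s) (be s) K = VVr K s" for K
    unfolding G.VVE G.Ps.US_formula VVr_def fres_def QLf_def PLf_def by (simp add: mult.assoc)
  have t: "tt d1 d2 (gam s) (al s) (be s) = ttf s" unfolding ttf_def ..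
  have S: "G.S = Sf s" unfolding G.S_def Sf_def G.ttE[symmetric] t PPf_def QQf_def ..
  have SP: "G.SP = SPf s" unfolding G.SP_def SPf_def S PLf_def QLf_def ..
  have R: "fres ((V1 d1 d2 (gam s) (al s) (be s) G.QQ + V2 d1 d2 (gam s) (al s) (be s) G.PP - G.PP * G.QQ) * fls_X) fls_X_inv
      = - (c1f s + c2f s)"
    unfolding G.R_eq S SP c1f_def c2f_def QQf_def PLf_def ..
  have h: "fres (G.PP ^ 2 * G.QQ) G.QQ / 2 = half s" unfolding half_def fres_def PPf_def QQf_def ..
  have "tail d1 d2 lg (gam s) (al s) (be s) = half s + ttf s * (- (c1f s + c2f s)) + 2 * ttf s ^ 2 * lg (gam s)"
    unfolding tail_def Let_def G.PzE G.QzE t h R ..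
  then show ?thesis unfolding FF_def G.PART1g U V Ef_def by simp
qed

lemma EQ: "eventually (\<lambda>s. FF d1 d2 lg (gam s) (al s) (be s) = Ef lg s) (nhds 0)"
  using ev_gam by (rule eventually_mono) (rule EQ_at)

definition "dc1 = fls_residue (dSf * (fls_deriv (QQf 0) * inverse (QQf 0)) +
    Sf 0 * (fls_deriv dQ * inverse (QQf 0) + fls_deriv (QQf 0) * (- dQ * inverse (QQf 0) ^ 2)))"
definition "dc2 = fls_residue (dSPf * (fls_deriv (PLf 0) * inverse (PLf 0)) +
    SPf 0 * (fls_deriv dPL * inverse (PLf 0) + fls_deriv (PLf 0) * (- dPL * inverse (PLf 0) ^ 2)))"

lemma D_E:
  assumes lgd: "(lg has_field_derivative inverse (gam 0)) (at (gam 0))" and t0: "fls_residue Om = 0"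
  shows "(Ef lg has_field_derivative
   ((\<Sum>K\<in>{1..d1+1}. (- fls_residue (QQf 0 powi (- int K) * Om)) * UUr K 0
        + uu d1 d2 (gam 0) (al 0) (be 0) K * (- fls_residue (QQf 0 ^ K * Om) / of_nat K))
   + (\<Sum>J\<in>{1..d2+1}. (- fls_residue (PLf 0 powi (- int J) * OmP)) * VVr J 0
        + vv d1 d2 (gam 0) (al 0) (be 0) J * (- fls_residue (PLf 0 ^ J * OmP) / of_nat J))
   + fls_residue (PPf 0 * QQf 0 * Om)
   + ttf 0 * (- (dc1 + dc2))
   + 2 * ttf 0 ^ 2 * (dg / gam 0)) / 2) (at 0)"
proof -
  have Dt: "(ttf has_field_derivative fls_residue Om) (at 0)" using D_t unfolding ttf_def[symmetric] .
  have s1: "((\<lambda>s. \<Sum>K\<in>{1..d1+1}. uu d1 d2 (gam s) (al s) (be s) K * UUr K s) has_field_derivative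
     (\<Sum>K\<in>{1..d1+1}. (- fls_residue (QQf 0 powi (- int K) * Om)) * UUr K 0
        + uu d1 d2 (gam 0) (al 0) (be 0) K * (- fls_residue (QQf 0 ^ K * Om) / of_nat K))) (at 0)"
  proof (rule DERIV_sum)
    fix K
    show "((\<lambda>s. uu d1 d2 (gam s) (al s) (be s) K * UUr K s) has_field_derivative
       (- fls_residue (QQf 0 powi (- int K) * Om)) * UUr K 0
        + uu d1 d2 (gam 0) (al 0) (be 0) K * (- fls_residue (QQf 0 ^ K * Om) / of_nat K)) (at 0)"
      by (rule DERIV_mult2[OF D_uu[of K] D_UUr[of K]])
  qed
  have s2: "((\<lambda>s. \<Sum>J\<in>{1..d2+1}. vv d1 d2 (gam s) (al s) (be s) J * VVr J s) has_field_derivative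
     (\<Sum>J\<in>{1..d2+1}. (- fls_residue (PLf 0 powi (- int J) * OmP)) * VVr J 0
        + vv d1 d2 (gam 0) (al 0) (be 0) J * (- fls_residue (PLf 0 ^ J * OmP) / of_nat J))) (at 0)"
  proof (rule DERIV_sum)
    fix J
    show "((\<lambda>s. vv d1 d2 (gam s) (al s) (be s) J * VVr J s) has_field_derivative
       (- fls_residue (PLf 0 powi (- int J) * OmP)) * VVr J 0
        + vv d1 d2 (gam 0) (al 0) (be 0) J * (- fls_residue (PLf 0 ^ J * OmP) / of_nat J)) (at 0)"
      by (rule DERIV_mult2[OF D_vv[of J] D_VVr[of J]])
  qed
  have s4: "((\<lambda>s. ttf s * (- (c1f s + c2f s))) has_field_derivative
      fls_residue Om * (- (c1f 0 + c2f 0)) + ttf 0 * (- (dc1 + dc2))) (at 0)"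
    unfolding dc1_def dc2_def by (rule DERIV_mult2[OF Dt DERIV_minus[OF DERIV_add[OF D_c1 D_c2]]])
  have s5: "((\<lambda>s. 2 * ttf s ^ 2 * lg (gam s)) has_field_derivative
      2 * (of_nat 2 * (fls_residue Om * ttf 0 ^ (2 - Suc 0)) * lg (gam 0) + ttf 0 ^ 2 * (inverse (gam 0) * dg))) (at 0)"
    using DERIV_cmult[OF DERIV_mult2[OF DERIV_power[OF Dt, of 2] DERIV_chain'[OF D_gam lgd]], of 2]
    by (simp add: mult.assoc)
  have "(Ef lg has_field_derivative
     ((\<Sum>K\<in>{1..d1+1}. (- fls_residue (QQf 0 powi (- int K) * Om)) * UUr K 0
        + uu d1 d2 (gam 0) (al 0) (be 0) K * (- fls_residue (QQf 0 ^ K * Om) / of_nat K))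
     + (\<Sum>J\<in>{1..d2+1}. (- fls_residue (PLf 0 powi (- int J) * OmP)) * VVr J 0
        + vv d1 d2 (gam 0) (al 0) (be 0) J * (- fls_residue (PLf 0 ^ J * OmP) / of_nat J))
     + fls_residue (PPf 0 * QQf 0 * Om)
     + (fls_residue Om * (- (c1f 0 + c2f 0)) + ttf 0 * (- (dc1 + dc2)))
     + 2 * (of_nat 2 * (fls_residue Om * ttf 0 ^ (2 - Suc 0)) * lg (gam 0) + ttf 0 ^ 2 * (inverse (gam 0) * dg))) / 2) (at 0)"
    unfolding Ef_def[abs_def]
    by (rule DERIV_cdivide[OF DERIV_add[OF DERIV_add[OF DERIV_add[OF DERIV_add[OF s1 s2] D_half] s4] s5]])
  moreover have "2 * (of_nat 2 * (fls_residue Om * ttf 0 ^ (2 - Suc 0)) * lg (gam 0) + ttf 0 ^ 2 * (inverse (gam 0) * dg))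
      = 2 * ttf 0 ^ 2 * (dg / gam 0)"
    unfolding t0 by (simp add: divide_inverse)
  moreover have "fls_residue Om * (- (c1f 0 + c2f 0)) + ttf 0 * (- (dc1 + dc2)) = ttf 0 * (- (dc1 + dc2))"
    unfolding t0 by simp
  ultimately show ?thesis by (simp only:)
qed

lemma fin_arith:
  fixes A1 A2 B1 B2 h t cc g :: complex
  assumes "A2 + B2 + h - t * cc + g = A1 + B1"
  shows "((A1 + A2) + (B1 + B2) + h + t * (- cc) + g) / 2 = A1 + B1"
  using assms by (simp add: field_simps)

lemma D_FF:
  assumes lgd: "(lg has_field_derivative inverse (gam 0)) (at (gam 0))" and t0: "fls_residue Om = 0"
  shows "((\<lambda>s. FF d1 d2 lg (gam s) (al s) (be s)) has_field_derivative
    (\<Sum>K\<in>{1..d1+1}. (- fls_residue (QQf 0 powi (- int K) * Om)) * UUr K 0)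
    + (\<Sum>J\<in>{1..d2+1}. (- fls_residue (PLf 0 powi (- int J) * OmP)) * VVr J 0)) (at 0)"
proof -
  interpret G: glob d1 d2 "gam 0" "al 0" "be 0" by unfold_locales (rule gam0)
  have e1: "G.dPP dg db = dP" "G.dQQ dg da = dQ" "G.dPL dg db = dPL" "G.dQL dg da = dQL"
    unfolding G.dPP_def G.dQQ_def G.dPL_def G.dQL_def dP_def dQ_def dPL_def dQL_def by simp_all
  have e2: "G.QQ = QQf 0" "G.PP = PPf 0" "G.PL = PLf 0" "G.QL = QLf 0"
    unfolding QQf_def PPf_def PLf_def QLf_def by simp_all
  have t: "tt d1 d2 (gam 0) (al 0) (be 0) = ttf 0" unfolding ttf_def ..
  have S: "G.S = Sf 0" unfolding G.S_def Sf_def G.ttE[symmetric] t PPf_def QQf_def ..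
  have SP: "G.SP = SPf 0" unfolding G.SP_def SPf_def S PLf_def QLf_def ..
  have U: "G.Qs.US K = UUr K 0" for K
    unfolding G.Qs.US_formula UUr_def fres_def PPf_def QQf_def by (simp add: mult.assoc)
  have V: "G.Ps.US K = VVr K 0" for K
    unfolding G.Ps.US_formula VVr_def fres_def QLf_def PLf_def by (simp add: mult.assoc)
  have u: "G.Qs.uS K = uu d1 d2 (gam 0) (al 0) (be 0) K" "G.Ps.uS K = vv d1 d2 (gam 0) (al 0) (be 0) K" for K
    using G.uuE G.vvE by simp_all
  have tS: "G.Qs.tS = ttf 0" using G.ttE t by simp
  have lpd: "lp dSf" unfolding dSf_def
    by (intro lp_integral lp_diff lp_add lp_mult lp_deriv lp_const lp_X_inv)
       (simp_all add: dP_def dQ_def QQf_def PPf_def lp_big lp_small)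
  have dS': "fls_deriv dSf = G.dPP dg db * fls_deriv G.QQ + G.PP * fls_deriv (G.dQQ dg da) - fls_const 0 * fls_X_inv"
  proof -
    have "dP * fls_deriv (QQf 0) + PPf 0 * fls_deriv dQ = Om + fls_deriv (PPf 0 * dQ)"
      unfolding Om_def by (simp add: algebra_simps)
    then have r: "fls_residue (dP * fls_deriv (QQf 0) + PPf 0 * fls_deriv dQ) = 0"
      using t0 by (simp only: fls_residue_add fls_residue_deriv) simp
    have "fls_deriv dSf = dP * fls_deriv (QQf 0) + PPf 0 * fls_deriv dQ - fls_const (fls_residue Om) * fls_X_inv"
      unfolding dSf_def by (rule fls_deriv_fls_integral) (use r t0 in simp)
    then show ?thesis unfolding e1 e2 t0 .
  qed
  note V0 = G.VAR[OF lpd dS']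
  have V1: "(\<Sum>K\<in>{1..d1+1}. uu d1 d2 (gam 0) (al 0) (be 0) K * (- fls_residue (QQf 0 ^ K * Om) / of_nat K))
       + (\<Sum>J\<in>{1..d2+1}. vv d1 d2 (gam 0) (al 0) (be 0) J * (- fls_residue (PLf 0 ^ J * OmP) / of_nat J))
       + fls_residue (PPf 0 * QQf 0 * Om) - ttf 0 * (dc1 + dc2) + 2 * ttf 0 ^ 2 * (dg / gam 0)
     = (\<Sum>K\<in>{1..d1+1}. (- fls_residue (QQf 0 powi (- int K) * Om)) * UUr K 0)
       + (\<Sum>J\<in>{1..d2+1}. (- fls_residue (PLf 0 powi (- int J) * OmP)) * VVr J 0)"
    using V0 unfolding e1 e2 S SP U V u tS Om_def[symmetric] OmP_def[symmetric] dSPf_def[symmetric]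
      dc1_def[symmetric] dc2_def[symmetric] by (simp only: mult.commute)
  note DE = D_E[OF lgd t0, unfolded sum.distrib, unfolded fin_arith[OF V1]]
  show ?thesis using DE EQ[of lg] DERIV_cong_ev[of 0 0 "\<lambda>s. FF d1 d2 lg (gam s) (al s) (be s)" "Ef lg"] by simp
qed
end

lemma big_cong: "(\<forall>j\<le>d. a j = a' j) \<Longrightarrow> big g a d = big g a' d"
  unfolding big_def by simp

lemma small_cong: "(\<forall>j\<le>d. a j = a' j) \<Longrightarrow> small g a d = small g a' d"
  unfolding small_def by simp

lemma UU_cong: "(\<forall>j\<le>d2. a j = a' j) \<Longrightarrow> (\<forall>j\<le>d1. b j = b' j) \<Longrightarrow> UU d1 d2 g a b K = UU d1 d2 g a' b' K"
  unfolding UU_def Qz_def Pz_def using big_cong[of d2 a a' g] small_cong[of d1 b b' g] by simp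

lemma VV_cong: "(\<forall>j\<le>d2. a j = a' j) \<Longrightarrow> (\<forall>j\<le>d1. b j = b' j) \<Longrightarrow> VV d1 d2 g a b K = VV d1 d2 g a' b' K"
  unfolding VV_def Pl_def Ql_def using big_cong[of d1 b b' g] small_cong[of d2 a a' g] by simp

context curve
begin

lemma coord_D:
  assumes ev: "eventually (\<lambda>s. \<forall>k<d1+d2+3. coord d1 d2 k (c s) = coord d1 d2 k p + (if k = i then s else 0)) (nhds 0)"
    and k: "k < d1 + d2 + 3"
  shows "((\<lambda>s. coord d1 d2 k (c s)) has_field_derivative (if k = i then 1 else 0)) (at 0)"
proof -
  have e: "eventually (\<lambda>s. coord d1 d2 k (c s) = coord d1 d2 k p + (if k = i then s else 0)) (nhds 0)"
    using ev by (rule eventually_mono) (use k in auto)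
  have "((\<lambda>s. coord d1 d2 k p + (if k = i then s else 0)) has_field_derivative (if k = i then 1 else 0)) (at 0)"
    by (cases "k = i") (auto intro!: derivative_eq_intros)
  then show ?thesis using DERIV_cong_ev[OF refl e refl] by simp
qed

lemma line_data:
  assumes ev: "eventually (\<lambda>s. \<forall>k<d1+d2+3. coord d1 d2 k (c s) = coord d1 d2 k p + (if k = i then s else 0)) (nhds 0)"
  shows "\<And>K. K \<in> {1..d1+1} \<Longrightarrow> - fls_residue (QQf 0 powi (- int K) * Om) = (if K - 1 = i then 1 else 0)"
    and "\<And>J. J \<in> {1..d2+1} \<Longrightarrow> - fls_residue (PLf 0 powi (- int J) * OmP) = (if d1 + J = i then 1 else 0)"
    and "fls_residue Om = (if d1 + d2 + 2 = i then 1 else 0)"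
proof -
  fix K assume K: "K \<in> {1..d1+1}"
  have "coord d1 d2 (K - 1) (c s) = uu d1 d2 (gam s) (al s) (be s) K" for s
    unfolding coord_def gam_def al_def be_def using K by auto
  then have "((\<lambda>s. uu d1 d2 (gam s) (al s) (be s) K) has_field_derivative (if K - 1 = i then 1 else 0)) (at 0)"
  proof -
    have "K - 1 < d1 + d2 + 3" using K by auto
    then show ?thesis using coord_D[OF ev, of "K - 1"] K \<open>\<And>s. coord d1 d2 (K - 1) (c s) = _\<close> by simp
  qed
  then show "- fls_residue (QQf 0 powi (- int K) * Om) = (if K - 1 = i then 1 else 0)"
    using D_uu[of K] DERIV_unique by blast
next
  fix J assume J: "J \<in> {1..d2+1}"
  have "coord d1 d2 (d1 + J) (c s) = vv d1 d2 (gam s) (al s) (be s) J" for s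
    unfolding coord_def gam_def al_def be_def using J by auto
  then have "((\<lambda>s. vv d1 d2 (gam s) (al s) (be s) J) has_field_derivative (if d1 + J = i then 1 else 0)) (at 0)"
  proof -
    have "d1 + J < d1 + d2 + 3" using J by auto
    then show ?thesis using coord_D[OF ev, of "d1 + J"] J \<open>\<And>s. coord d1 d2 (d1 + J) (c s) = _\<close> by simp
  qed
  then show "- fls_residue (PLf 0 powi (- int J) * OmP) = (if d1 + J = i then 1 else 0)"
    using D_vv[of J] DERIV_unique by blast
next
  have "coord d1 d2 (d1 + d2 + 2) (c s) = tt d1 d2 (gam s) (al s) (be s)" for s
    unfolding coord_def gam_def al_def be_def by auto
  then have "((\<lambda>s. tt d1 d2 (gam s) (al s) (be s)) has_field_derivative (if d1 + d2 + 2 = i then 1 else 0)) (at 0)"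
    using coord_D[OF ev, of "d1 + d2 + 2"] by simp
  then show "fls_residue Om = (if d1 + d2 + 2 = i then 1 else 0)"
    using D_t DERIV_unique by blast
qed

lemma UUr0: "UUr K 0 = UU d1 d2 (gam 0) (al 0) (be 0) K"
proof -
  interpret G: glob d1 d2 "gam 0" "al 0" "be 0" by unfold_locales (rule gam0)
  show ?thesis unfolding G.UUE G.Qs.US_formula UUr_def fres_def PPf_def QQf_def by (simp add: mult.assoc)
qed

lemma VVr0: "VVr K 0 = VV d1 d2 (gam 0) (al 0) (be 0) K"
proof -
  interpret G: glob d1 d2 "gam 0" "al 0" "be 0" by unfold_locales (rule gam0)
  show ?thesis unfolding G.VVE G.Ps.US_formula VVr_def fres_def QLf_def PLf_def by (simp add: mult.assoc)
qed

end

theorem theorem2p1: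
  fixes d1 d2 :: nat
  assumes "d1 \<ge> 1" and "d2 \<ge> 1"
  shows
    "(\<forall>lg \<gamma> \<alpha> \<beta>. \<gamma> \<noteq> 0 \<longrightarrow>
        twoF d1 d2 lg \<gamma> \<alpha> \<beta> =
          (\<Sum>K\<in>{1..d1+1}. uu d1 d2 \<gamma> \<alpha> \<beta> K * UU d1 d2 \<gamma> \<alpha> \<beta> K)
        + (\<Sum>J\<in>{1..d2+1}. vv d1 d2 \<gamma> \<alpha> \<beta> J * VV d1 d2 \<gamma> \<alpha> \<beta> J)
        + tail d1 d2 lg \<gamma> \<alpha> \<beta>)
   \<and> (\<forall>p lg S. pg p \<noteq> 0 \<and> jac_nonsingular d1 d2 p \<and>
        open S \<and> pg p \<in> S \<and> lg holomorphic_on S \<and> (\<forall>x\<in>S. exp (lg x) = x) \<longrightarrow>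
        (\<forall>K\<in>{1..d1+1}. has_partial d1 d2 (\<lambda>q. FF d1 d2 lg (pg q) (pa q) (pb d2 q)) (K - 1) p
                          (UU d1 d2 (pg p) (pa p) (pb d2 p) K))
      \<and> (\<forall>J\<in>{1..d2+1}. has_partial d1 d2 (\<lambda>q. FF d1 d2 lg (pg q) (pa q) (pb d2 q)) (d1 + J) p
                          (VV d1 d2 (pg p) (pa p) (pb d2 p) J)))"
proof (intro conjI allI impI)
  fix lg \<gamma> \<alpha> \<beta> assume g: "(\<gamma>::complex) \<noteq> 0"
  interpret G: glob d1 d2 \<gamma> \<alpha> \<beta> by unfold_locales (rule g)
  show "twoF d1 d2 lg \<gamma> \<alpha> \<beta> =
          (\<Sum>K\<in>{1..d1+1}. uu d1 d2 \<gamma> \<alpha> \<beta> K * UU d1 d2 \<gamma> \<alpha> \<beta> K)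
        + (\<Sum>J\<in>{1..d2+1}. vv d1 d2 \<gamma> \<alpha> \<beta> J * VV d1 d2 \<gamma> \<alpha> \<beta> J)
        + tail d1 d2 lg \<gamma> \<alpha> \<beta>" by (rule G.PART1g)
next
  fix p lg S
  assume h: "pg p \<noteq> 0 \<and> jac_nonsingular d1 d2 p \<and> open S \<and> pg p \<in> S \<and> lg holomorphic_on S \<and> (\<forall>x\<in>S. exp (lg x) = x)"
  have lgd: "(lg has_field_derivative inverse (pg p)) (at (pg p))"
    using lg_deriv[of S "pg p" lg] h by blast
  have main: "((\<lambda>s. FF d1 d2 lg (pg (c s)) (pa (c s)) (pb d2 (c s))) has_field_derivative
      (\<Sum>K\<in>{1..d1+1}. (if K - 1 = i then 1 else 0) * UU d1 d2 (pg p) (pa p) (pb d2 p) K)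
      + (\<Sum>J\<in>{1..d2+1}. (if d1 + J = i then 1 else 0) * VV d1 d2 (pg p) (pa p) (pb d2 p) J)) (at 0)"
    if cl: "coord_line d1 d2 i p c" and i: "i \<le> d1 + d2 + 1" for i c
  proof -
    have c0: "\<forall>j<d1+d2+3. c 0 j = p j" and cdf: "\<forall>j<d1+d2+3. (\<lambda>s. c s j) field_differentiable (at 0)"
      and ev: "eventually (\<lambda>s. \<forall>k<d1+d2+3. coord d1 d2 k (c s) = coord d1 d2 k p + (if k = i then s else 0)) (nhds 0)"
      using cl unfolding coord_line_def by auto
    define c' where "c' j = deriv (\<lambda>s. c s j) 0" for j
    have cd: "((\<lambda>s. c s j) has_field_derivative c' j) (at 0)" if "j < d1 + d2 + 3" for j
      unfolding c'_def using cdf that DERIV_deriv_iff_field_differentiable by blast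
    have g0: "c 0 0 \<noteq> 0" using c0 h unfolding pg_def by auto
    interpret C: curve d1 d2 c c' by unfold_locales (use cd g0 in auto)
    have gp: "C.gam 0 = pg p" unfolding C.gam_def pg_def using c0 by simp
    have t0: "fls_residue C.Om = 0" using C.line_data(3)[OF ev] i by simp
    have lgd': "(lg has_field_derivative inverse (C.gam 0)) (at (C.gam 0))" using lgd gp by simp
    have ag: "\<forall>j\<le>d2. C.al 0 j = pa p j" "\<forall>j\<le>d1. C.be 0 j = pb d2 p j"
      unfolding C.al_def C.be_def pa_def pb_def using c0 by auto
    have U: "C.UUr K 0 = UU d1 d2 (pg p) (pa p) (pb d2 p) K" for K
      unfolding C.UUr0 gp by (rule UU_cong[OF ag])
    have V: "C.VVr K 0 = VV d1 d2 (pg p) (pa p) (pb d2 p) K" for K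
      unfolding C.VVr0 gp by (rule VV_cong[OF ag])
    have s1: "(\<Sum>K\<in>{1..d1+1}. (- fls_residue (C.QQf 0 powi (- int K) * C.Om)) * C.UUr K 0)
        = (\<Sum>K\<in>{1..d1+1}. (if K - 1 = i then 1 else 0) * UU d1 d2 (pg p) (pa p) (pb d2 p) K)"
      by (intro sum.cong refl) (simp only: C.line_data(1)[OF ev] U)
    have s2: "(\<Sum>J\<in>{1..d2+1}. (- fls_residue (C.PLf 0 powi (- int J) * C.OmP)) * C.VVr J 0)
        = (\<Sum>J\<in>{1..d2+1}. (if d1 + J = i then 1 else 0) * VV d1 d2 (pg p) (pa p) (pb d2 p) J)"
      by (intro sum.cong refl) (simp only: C.line_data(2)[OF ev] V)
    show ?thesis using C.D_FF[OF lgd' t0] unfolding s1 s2 C.gam_def C.al_def C.be_def .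
  qed
  show "\<forall>K\<in>{1..d1+1}. has_partial d1 d2 (\<lambda>q. FF d1 d2 lg (pg q) (pa q) (pb d2 q)) (K - 1) p
                          (UU d1 d2 (pg p) (pa p) (pb d2 p) K)"
  proof (intro ballI)
    fix K0 assume K0: "K0 \<in> {1..d1+1}"
    show "has_partial d1 d2 (\<lambda>q. FF d1 d2 lg (pg q) (pa q) (pb d2 q)) (K0 - 1) p (UU d1 d2 (pg p) (pa p) (pb d2 p) K0)"
      unfolding has_partial_def
    proof (intro allI impI)
      fix c assume cl: "coord_line d1 d2 (K0 - 1) p c"
      have i: "K0 - 1 \<le> d1 + d2 + 1" using K0 by auto
      have a: "(\<Sum>K\<in>{1..d1+1}. (if K - 1 = K0 - 1 then 1 else 0) * UU d1 d2 (pg p) (pa p) (pb d2 p) K)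
          = UU d1 d2 (pg p) (pa p) (pb d2 p) K0"
      proof -
        have "(\<Sum>K\<in>{1..d1+1}. (if K - 1 = K0 - 1 then 1 else 0) * UU d1 d2 (pg p) (pa p) (pb d2 p) K)
            = (\<Sum>K\<in>{1..d1+1}. if K = K0 then UU d1 d2 (pg p) (pa p) (pb d2 p) K else 0)"
          by (intro sum.cong refl) (use K0 in auto)
        then show ?thesis using K0 by simp
      qed
      have b: "(\<Sum>J\<in>{1..d2+1}. (if d1 + J = K0 - 1 then 1 else 0) * VV d1 d2 (pg p) (pa p) (pb d2 p) J) = 0"
        by (intro sum.neutral) (use K0 in auto)
      show "((\<lambda>s. FF d1 d2 lg (pg (c s)) (pa (c s)) (pb d2 (c s))) has_field_derivative UU d1 d2 (pg p) (pa p) (pb d2 p) K0) (at 0)"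
        using main[OF cl i] unfolding a b by simp
    qed
  qed
  show "\<forall>J\<in>{1..d2+1}. has_partial d1 d2 (\<lambda>q. FF d1 d2 lg (pg q) (pa q) (pb d2 q)) (d1 + J) p
                          (VV d1 d2 (pg p) (pa p) (pb d2 p) J)"
  proof (intro ballI)
    fix J0 assume J0: "J0 \<in> {1..d2+1}"
    show "has_partial d1 d2 (\<lambda>q. FF d1 d2 lg (pg q) (pa q) (pb d2 q)) (d1 + J0) p (VV d1 d2 (pg p) (pa p) (pb d2 p) J0)"
      unfolding has_partial_def
    proof (intro allI impI)
      fix c assume cl: "coord_line d1 d2 (d1 + J0) p c"
      have i: "d1 + J0 \<le> d1 + d2 + 1" using J0 by auto
      have a: "(\<Sum>K\<in>{1..d1+1}. (if K - 1 = d1 + J0 then 1 else 0) * UU d1 d2 (pg p) (pa p) (pb d2 p) K) = 0"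
        by (intro sum.neutral) (use J0 in auto)
      have b: "(\<Sum>J\<in>{1..d2+1}. (if d1 + J = d1 + J0 then 1 else 0) * VV d1 d2 (pg p) (pa p) (pb d2 p) J)
          = VV d1 d2 (pg p) (pa p) (pb d2 p) J0"
      proof -
        have "(\<Sum>J\<in>{1..d2+1}. (if d1 + J = d1 + J0 then 1 else 0) * VV d1 d2 (pg p) (pa p) (pb d2 p) J)
            = (\<Sum>J\<in>{1..d2+1}. if J = J0 then VV d1 d2 (pg p) (pa p) (pb d2 p) J else 0)"
          by (intro sum.cong refl) auto
        then show ?thesis using J0 by simp
      qed
      show "((\<lambda>s. FF d1 d2 lg (pg (c s)) (pa (c s)) (pb d2 (c s))) has_field_derivative VV d1 d2 (pg p) (pa p) (pb d2 p) J0) (at 0)"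
        using main[OF cl i] unfolding a b by simp
    qed
  qed
qed

end
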